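(* Let $\rho\in(0,1/4)$, $\phi:(0,1)\to\mathbb{R}_+$, $\alpha\geqslant0$, and let $\{\psi_t\}_{t\geqslant0}$ be a preconditioned first-order method with $(\rho,\phi(\rho),\alpha)$-linear convergence. Fix $\delta\in(0,1)$ and a random embedding with critical sketch size $m_\delta$. Run the following adaptive algorithm with inputs $\rho$, $\{\psi_t\}$, an initial sketch size $m_{\mathrm{init}}\geqslant1$, an initial point $x_0$ and an iteration number $T\geqslant0$: initialize $t=0$, $I=0$, $m_0=m_{\mathrm{init}}$; sample $S_0\in\mathbb{R}^{m_0\times n}$ from the embedding and compute $\widetilde\delta_I=\frac12\nabla f(x_0)^\top H_{S_0}^{-1}\nabla f(x_0)$; while $t<T$: compute $x^+=\psi_{t-I}(x_I,\dots,x_t;H_{S_t})$ and $\widetilde\delta^+=\frac12\nabla f(x^+)^\top H_{S_t}^{-1}\nabla f(x^+)$; if $\widetilde\delta^+/\widetilde\delta_I>c(\alpha,\rho)\,\phi(\rho)^{t+1-I}$, then set $I=t$, replace $m_t$ by $2m_t$, sample a new independent $S_t\in\mathbb{R}^{m_t\times n}$ from the embedding and recompute $\widetilde\delta_I=\frac12\nabla f(x_t)^\top H_{S_t}^{-1}\nabla f(x_t)$; otherwise set $x_{t+1}=x^+$, $m_{t+1}=m_t$, $S_{t+1}=S_t$ and $t\leftarrow t+1$. Here $c(\alpha,\rho)=\frac{1+\sqrt\rho}{1-\sqrt\rho}\,\alpha$, $m_t$ denotes the sketch size in use on the time interval $(t,t+1)$ (after any increases performed at time $t$), and $K_t$ denotes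 the number of times the sketch size has been increased up to time $t$. Then, for any $m_{\mathrm{init}}\geqslant1$, with probability at least $1-(1+K_{\max})\delta$, simultaneously for all $t\geqslant0$: $m_t\leqslant\max\{m_{\mathrm{init}},2m_\delta/\rho\}$, $K_t\leqslant K_{\max}$, and $$\frac{\delta_t}{\delta_0}\leqslant\alpha\,\phi(\rho)^t\Big(c(\alpha,\rho)\,\frac{\sigma_1^2+\nu^2}{\nu^2}\Big)^{K_{\max}}2^{K_{\max}^2},$$ where $K_{\max}=\big\lceil\log_2\big(\tfrac{m_\delta}{m_{\mathrm{init}}\rho}\big)_+\big\rceil$ and $\sigma_1$ is the largest singular value of $A$.
   Context: Let $A\in\mathbb{R}^{n\times d}$ with $n\geqslant d$, $b\in\mathbb{R}^d$, $\Lambda\in\mathbb{R}^{d\times d}$ diagonal with $\Lambda\succeq I_d$, and $\nu>0$. Set $H=A^\top A+\nu^2\Lambda$, $f(x)=\frac12 x^\top Hx-b^\top x$, $x^*=H^{-1}b$, and $\delta_t=\frac12\|x_t-x^*\|_H^2$ with $\|z\|_H^2=z^\top Hz$. For $S\in\mathbb{R}^{m\times n}$ set $H_S=A^\top S^\top SA+\nu^2\Lambda$ and $C_S=H^{-1/2}H_SH^{-1/2}$. For $\rho>0$, $\mathcal{E}^m_\rho$ is the event $\|C_S-I_d\|_2\leqslant\max\{\sqrt\rho,\rho\}$. A random embedding is a family of distributions of random matrices $S\in\mathbb{R}^{m\times n}$, one for each $m\geqslant1$; given $\delta\in(0,1)$, its critical sketch size is $m_\delta=\inf\{k\geqslant1:\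 \mathbb{P}(\mathcal{E}^m_\rho)\geqslant1-\delta \text{ for all }\rho>0\text{ and all } m\geqslant k/\rho\}$. A preconditioned first-order method is a sequence of functions $\{\psi_t\}_{t\geqslant0}$ such that for any $P\succ0$ and $x_0\in\mathbb{R}^d$ the iterates $x_{t+1}=\psi_t(x_0,\dots,x_t;P)$ satisfy $x_{t+1}\in x_0+P^{-1}\mathrm{span}\{\nabla f(x_0),\dots,\nabla f(x_t)\}$; it has $(\rho,\phi(\rho),\alpha)$-linear convergence if for all $x_0$, $m\geqslant1$, $S\in\mathbb{R}^{m\times n}$ with $\|C_S-I_d\|_2\leqslant\max\{\sqrt\rho,\rho\}$, the iterates $x_{t+1}=\psi_t(x_0,\dots,x_t;H_S)$ satisfy $\delta_t\leqslant\alpha\phi(\rho)^t\delta_0$ for all $t\geqslant0$. *)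

theory Defs
  imports "HOL-Analysis.Analysis" "HOL-Probability.Probability"
begin

definition Hmat :: "real^'d^'n \<Rightarrow> real^'d^'d \<Rightarrow> real \<Rightarrow> real^'d^'d" where
  "Hmat A \<Lambda> \<nu> = transpose A ** A + (\<nu>^2) *\<^sub>R \<Lambda>"

text \<open>A sketching matrix S in R^{m x n} is represented by its rows S 0, ..., S (m-1) in R^n
  (rows with index >= m are ignored).  sketch_gram m S is S^T S.\<close>

definition sketch_gram :: "nat \<Rightarrow> (nat \<Rightarrow> real^'n) \<Rightarrow> real^'n^'n" where
  "sketch_gram m S = (\<chi> j k. \<Sum>i<m. S i $ j * S i $ k)"

definition HSmat :: "real^'d^'n \<Rightarrow> real^'d^'d \<Rightarrow> real \<Rightarrow> nat \<Rightarrow> (nat \<Rightarrow> real^'n) \<Rightarrow> real^'d^'d" where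
  "HSmat A \<Lambda> \<nu> m S = transpose A ** sketch_gram m S ** A + (\<nu>^2) *\<^sub>R \<Lambda>"

definition fobj :: "real^'d^'n \<Rightarrow> real^'d \<Rightarrow> real^'d^'d \<Rightarrow> real \<Rightarrow> real^'d \<Rightarrow> real" where
  "fobj A b \<Lambda> \<nu> x = 1/2 * (x \<bullet> (Hmat A \<Lambda> \<nu> *v x)) - b \<bullet> x"

definition grad_f :: "real^'d^'n \<Rightarrow> real^'d \<Rightarrow> real^'d^'d \<Rightarrow> real \<Rightarrow> real^'d \<Rightarrow> real^'d" where
  "grad_f A b \<Lambda> \<nu> x = Hmat A \<Lambda> \<nu> *v x - b"

definition xstar :: "real^'d^'n \<Rightarrow> real^'d \<Rightarrow> real^'d^'d \<Rightarrow> real \<Rightarrow> real^'d" where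
  "xstar A b \<Lambda> \<nu> = matrix_inv (Hmat A \<Lambda> \<nu>) *v b"

definition subopt :: "real^'d^'n \<Rightarrow> real^'d \<Rightarrow> real^'d^'d \<Rightarrow> real \<Rightarrow> real^'d \<Rightarrow> real" where
  "subopt A b \<Lambda> \<nu> x = 1/2 * ((x - xstar A b \<Lambda> \<nu>) \<bullet> (Hmat A \<Lambda> \<nu> *v (x - xstar A b \<Lambda> \<nu>)))"

definition psd_sqrt :: "real^'d^'d \<Rightarrow> real^'d^'d" where
  "psd_sqrt M = (THE R. transpose R = R \<and> (\<forall>x. 0 \<le> x \<bullet> (R *v x)) \<and> R ** R = M)"

definition spec_norm :: "real^'d^'e \<Rightarrow> real" where
  "spec_norm M = onorm (\<lambda>x. M *v x)"

definition CSmat :: "real^'d^'n \<Rightarrow> real^'d^'d \<Rightarrow> real \<Rightarrow> nat \<Rightarrow> (nat \<Rightarrow> real^'n) \<Rightarrow> real^'d^'d" where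
  "CSmat A \<Lambda> \<nu> m S = matrix_inv (psd_sqrt (Hmat A \<Lambda> \<nu>)) ** HSmat A \<Lambda> \<nu> m S
      ** matrix_inv (psd_sqrt (Hmat A \<Lambda> \<nu>))"

definition sketch_event :: "real^'d^'n \<Rightarrow> real^'d^'d \<Rightarrow> real \<Rightarrow> real \<Rightarrow> nat \<Rightarrow> (nat \<Rightarrow> real^'n) \<Rightarrow> bool" where
  "sketch_event A \<Lambda> \<nu> \<rho> m S \<longleftrightarrow> spec_norm (CSmat A \<Lambda> \<nu> m S - mat 1) \<le> max (sqrt \<rho>) \<rho>"

text \<open>Random embedding: D m is the distribution of the m x n sketch (as rows).
  Critical sketch size m_delta = inf of the set below.\<close>

definition crit_set :: "real^'d^'n \<Rightarrow> real^'d^'d \<Rightarrow> real \<Rightarrow> (nat \<Rightarrow> (nat \<Rightarrow> real^'n) measure) \<Rightarrow> real \<Rightarrow> nat set" where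
  "crit_set A \<Lambda> \<nu> D \<delta> = {k. k \<ge> 1 \<and> (\<forall>\<rho>>0. \<forall>m::nat. m \<ge> 1 \<and> real m \<ge> real k / \<rho> \<longrightarrow>
      measure (D m) {S \<in> space (D m). sketch_event A \<Lambda> \<nu> \<rho> m S} \<ge> 1 - \<delta>)}"

definition crit_size :: "real^'d^'n \<Rightarrow> real^'d^'d \<Rightarrow> real \<Rightarrow> (nat \<Rightarrow> (nat \<Rightarrow> real^'n) measure) \<Rightarrow> real \<Rightarrow> nat" where
  "crit_size A \<Lambda> \<nu> D \<delta> = Inf (crit_set A \<Lambda> \<nu> D \<delta>)"

type_synonym 'd pfom = "nat \<Rightarrow> (real^'d) list \<Rightarrow> real^'d^'d \<Rightarrow> real^'d"

fun pfom_list :: "'d pfom \<Rightarrow> real^'d^'d \<Rightarrow> real^'d \<Rightarrow> nat \<Rightarrow> (real^'d) list" where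
  "pfom_list \<psi> P x0 0 = [x0]"
| "pfom_list \<psi> P x0 (Suc t) = pfom_list \<psi> P x0 t @ [\<psi> t (pfom_list \<psi> P x0 t) P]"

definition pos_def :: "real^'d^'d \<Rightarrow> bool" where
  "pos_def P \<longleftrightarrow> transpose P = P \<and> (\<forall>x. x \<noteq> 0 \<longrightarrow> 0 < x \<bullet> (P *v x))"

definition is_pfom :: "real^'d^'n \<Rightarrow> real^'d \<Rightarrow> real^'d^'d \<Rightarrow> real \<Rightarrow> 'd pfom \<Rightarrow> bool" where
  "is_pfom A b \<Lambda> \<nu> \<psi> \<longleftrightarrow> (\<forall>P x0 t. pos_def P \<longrightarrow>
     pfom_list \<psi> P x0 (Suc t) ! Suc t \<in>
       (\<lambda>v. x0 + matrix_inv P *v v) ` span (grad_f A b \<Lambda> \<nu> ` set (pfom_list \<psi> P x0 t)))"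

definition lin_conv :: "real^'d^'n \<Rightarrow> real^'d \<Rightarrow> real^'d^'d \<Rightarrow> real \<Rightarrow> 'd pfom \<Rightarrow> real \<Rightarrow> real \<Rightarrow> real \<Rightarrow> bool" where
  "lin_conv A b \<Lambda> \<nu> \<psi> \<rho> r \<alpha> \<longleftrightarrow> (\<forall>x0 m S t. m \<ge> 1 \<longrightarrow> sketch_event A \<Lambda> \<nu> \<rho> m S \<longrightarrow>
     subopt A b \<Lambda> \<nu> (pfom_list \<psi> (HSmat A \<Lambda> \<nu> m S) x0 t ! t) \<le> \<alpha> * r ^ t * subopt A b \<Lambda> \<nu> x0)"

text \<open>The adaptive algorithm.  omega k is the k-th independently sampled sketch, of size m_init * 2^k.
  State (t, I, k, [x_0..x_t], tilde-delta_I), k = number of sketch-size increases so far.\<close>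

definition dtil :: "real^'d^'n \<Rightarrow> real^'d \<Rightarrow> real^'d^'d \<Rightarrow> real \<Rightarrow> real^'d^'d \<Rightarrow> real^'d \<Rightarrow> real" where
  "dtil A b \<Lambda> \<nu> P x = 1/2 * (grad_f A b \<Lambda> \<nu> x \<bullet> (matrix_inv P *v grad_f A b \<Lambda> \<nu> x))"

type_synonym 'd alg_state = "nat \<times> nat \<times> nat \<times> (real^'d) list \<times> real"

definition alg_step :: "real^'d^'n \<Rightarrow> real^'d \<Rightarrow> real^'d^'d \<Rightarrow> real \<Rightarrow> 'd pfom \<Rightarrow> real \<Rightarrow> real
    \<Rightarrow> nat \<Rightarrow> (nat \<Rightarrow> nat \<Rightarrow> real^'n) \<Rightarrow> nat \<Rightarrow> 'd alg_state \<Rightarrow> 'd alg_state" where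
  "alg_step A b \<Lambda> \<nu> \<psi> c r m_init \<omega> T st = (case st of (t, I, k, xs, dI) \<Rightarrow>
     if t < T then
       (let P = HSmat A \<Lambda> \<nu> (m_init * 2^k) (\<omega> k);
            xp = \<psi> (t - I) (drop I xs) P;
            dp = dtil A b \<Lambda> \<nu> P xp
        in if dp / dI > c * r ^ (t + 1 - I)
           then (t, t, Suc k, xs,
                 dtil A b \<Lambda> \<nu> (HSmat A \<Lambda> \<nu> (m_init * 2^(Suc k)) (\<omega> (Suc k))) (xs ! t))
           else (Suc t, I, k, xs @ [xp], dI))
     else st)"

definition alg_run :: "real^'d^'n \<Rightarrow> real^'d \<Rightarrow> real^'d^'d \<Rightarrow> real \<Rightarrow> 'd pfom \<Rightarrow> real \<Rightarrow> real
    \<Rightarrow> nat \<Rightarrow> (nat \<Rightarrow> nat \<Rightarrow> real^'n) \<Rightarrow> nat \<Rightarrow> real^'d \<Rightarrow> nat \<Rightarrow> 'd alg_state" where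
  "alg_run A b \<Lambda> \<nu> \<psi> c r m_init \<omega> T x0 j =
     (alg_step A b \<Lambda> \<nu> \<psi> c r m_init \<omega> T ^^ j)
       (0, 0, 0, [x0], dtil A b \<Lambda> \<nu> (HSmat A \<Lambda> \<nu> m_init (\<omega> 0)) x0)"

definition sigma_max :: "real^'d^'n \<Rightarrow> real" where
  "sigma_max A = sqrt (Max {l. \<exists>v. v \<noteq> 0 \<and> (transpose A ** A) *v v = l *\<^sub>R v})"

definition c_const :: "real \<Rightarrow> real \<Rightarrow> real" where
  "c_const \<alpha> \<rho> = (1 + sqrt \<rho>) / (1 - sqrt \<rho>) * \<alpha>"

end

theory Submission
  imports Defs
begin

lemma sym_dot:
  fixes M :: "real^'n^'n"
  assumes "transpose M = M"
  shows "(M *v x) \<bullet> y = x \<bullet> (M *v y)"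
proof -
  have "M *v x = x v* M" by (metis assms transpose_matrix_vector)
  thus ?thesis by (simp add: dot_lmul_matrix)
qed

lemma sym_from_dot:
  fixes M :: "real^'n^'n"
  assumes "\<And>x y. (M *v x) \<bullet> y = x \<bullet> (M *v y)"
  shows "transpose M = M"
proof -
  have "M $ j $ i = M $ i $ j" for i j
  proof -
    have "M $ j $ i = (M *v axis i 1) \<bullet> axis j 1"
      by (simp add: matrix_vector_mul_component inner_axis)
    also have "\<dots> = axis i 1 \<bullet> (M *v axis j 1)" by (rule assms)
    also have "\<dots> = M $ i $ j"
      by (simp add: matrix_vector_mul_component inner_axis' inner_commute)
    finally show ?thesis .
  qed
  thus ?thesis by (simp add: transpose_def vec_eq_iff)
qed

lemma quad_ge_bound:
  fixes a b :: real
  assumes "\<And>t. 2 * t * a + t^2 * b \<le> 0" "a \<ge> 0"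
  shows "a = 0"
proof (rule ccontr)
  assume "a \<noteq> 0" hence a: "a > 0" using assms(2) by simp
  define t where "t = a / (\<bar>b\<bar> + 1)"
  have t: "t > 0" "t * (\<bar>b\<bar> + 1) = a" using a by (auto simp: t_def field_simps)
  have "- \<bar>b\<bar> \<le> b" by simp
  hence "t * b \<ge> - t * \<bar>b\<bar>" using t(1) mult_left_mono[of "- \<bar>b\<bar>" b t] by simp
  hence "t * b \<ge> - a + t" using t by (simp add: algebra_simps)
  have "2 * t * a + t^2 * b = t * (2 * a + t * b)" by (simp add: power2_eq_square algebra_simps)
  also have "\<dots> > 0" using t(1) \<open>t * b \<ge> - a + t\<close> a by (intro mult_pos_pos) auto
  finally show False using assms(1)[of t] by simp
qed

lemma spectral_subspace:
  fixes M :: "real^'n^'n"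
  assumes sym: "transpose M = M"
  shows "subspace V \<Longrightarrow> (\<forall>x\<in>V. M *v x \<in> V) \<Longrightarrow>
    \<exists>B. B \<subseteq> V \<and> finite B \<and> pairwise orthogonal B \<and> (\<forall>b\<in>B. norm b = 1 \<and> (\<exists>l. M *v b = l *\<^sub>R b)) \<and> span B = V"
proof (induction "dim V" arbitrary: V rule: less_induct)
  case less
  show ?case
  proof (cases "V = {0}")
    case True
    thus ?thesis by (intro exI[of _ "{}"]) auto
  next
    case False
    then obtain v where v: "v \<in> V" "v \<noteq> 0" using less.prems(1) subspace_0 by blast
    define S where "S = V \<inter> sphere 0 1"
    have "compact S" unfolding S_def
      by (intro closed_Int_compact closed_subspace less.prems(1) compact_sphere)
    moreover have "v /\<^sub>R norm v \<in> S" using v less.prems(1) by (auto simp: S_def subspace_scale)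
    hence "S \<noteq> {}" by blast
    moreover have "continuous_on S (\<lambda>x. x \<bullet> (M *v x))"
      by (intro continuous_on_inner continuous_on_id linear_continuous_on matrix_vector_mul_bounded_linear)
    ultimately have "\<exists>x\<in>S. \<forall>y\<in>S. y \<bullet> (M *v y) \<le> x \<bullet> (M *v x)"
      by (rule continuous_attains_sup)
    then obtain u where u: "u \<in> S" and umax: "\<And>y. y \<in> S \<Longrightarrow> y \<bullet> (M *v y) \<le> u \<bullet> (M *v u)"
      by blast
    define \<mu> where "\<mu> = u \<bullet> (M *v u)"
    have uV: "u \<in> V" and nu: "norm u = 1" using u by (auto simp: S_def)
    have uu: "u \<bullet> u = 1" using nu by (simp add: norm_eq_1)
    have bnd: "x \<bullet> (M *v x) \<le> \<mu> * (x \<bullet> x)" if "x \<in> V" for x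
    proof (cases "x = 0")
      case True thus ?thesis by simp
    next
      case False
      have "x /\<^sub>R norm x \<in> S" using that False less.prems(1) by (auto simp: S_def subspace_scale)
      hence "(x /\<^sub>R norm x) \<bullet> (M *v (x /\<^sub>R norm x)) \<le> \<mu>" using umax \<mu>_def by blast
      hence "(x \<bullet> (M *v x)) / (norm x)^2 \<le> \<mu>"
        by (simp add: matrix_vector_mult_scaleR power2_eq_square divide_inverse mult_ac)
      moreover have "(norm x)^2 > 0" using False by simp
      ultimately show ?thesis by (simp add: divide_le_eq power2_norm_eq_inner mult.commute)
    qed
    define w where "w = M *v u - \<mu> *\<^sub>R u"
    have wV: "w \<in> V" unfolding w_def using less.prems uV by (simp add: subspace_diff subspace_scale)
    have wu: "w \<bullet> u = 0" unfolding w_def inner_diff_left inner_scaleR_left uu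
      by (simp add: \<mu>_def inner_commute[of u])
    have wMu: "w \<bullet> (M *v u) = w \<bullet> w" unfolding w_def
      by (simp add: inner_diff_right wu[unfolded w_def])
    have "2 * t * (w \<bullet> w) + t^2 * (w \<bullet> (M *v w) - \<mu> * (w \<bullet> w)) \<le> 0" for t
    proof -
      have "(u + t *\<^sub>R w) \<in> V" using less.prems(1) uV wV by (simp add: subspace_add subspace_scale)
      from bnd[OF this]
      have h1: "(u + t *\<^sub>R w) \<bullet> (M *v (u + t *\<^sub>R w)) \<le> \<mu> * ((u + t *\<^sub>R w) \<bullet> (u + t *\<^sub>R w))" .
      have h2: "(u + t *\<^sub>R w) \<bullet> (M *v (u + t *\<^sub>R w)) = \<mu> + 2 * t * (w \<bullet> w) + t^2 * (w \<bullet> (M *v w))"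
        using sym_dot[OF sym, of u w] wMu inner_commute[of w "M *v u"]
        by (simp add: matrix_vector_right_distrib matrix_vector_mult_scaleR inner_add_left inner_add_right
            \<mu>_def power2_eq_square algebra_simps)
      have h3: "(u + t *\<^sub>R w) \<bullet> (u + t *\<^sub>R w) = 1 + t^2 * (w \<bullet> w)"
        using uu wu by (simp add: inner_add_left inner_add_right power2_eq_square inner_commute)
      have "\<mu> + 2 * t * (w \<bullet> w) + t^2 * (w \<bullet> (M *v w)) \<le> \<mu> * (1 + t^2 * (w \<bullet> w))"
        using h1 unfolding h2 h3 .
      thus ?thesis by (simp add: algebra_simps)
    qed
    hence "w \<bullet> w = 0" by (intro quad_ge_bound) auto
    hence eig: "M *v u = \<mu> *\<^sub>R u" unfolding w_def by simp
    define W where "W = V \<inter> {x. u \<bullet> x = 0}"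
    have subW: "subspace W" unfolding W_def
      by (intro subspace_inter less.prems(1) subspace_hyperplane)
    have invW: "\<forall>x\<in>W. M *v x \<in> W"
    proof
      fix x assume "x \<in> W"
      hence "x \<in> V" "u \<bullet> x = 0" by (auto simp: W_def)
      moreover have "u \<bullet> (M *v x) = (M *v u) \<bullet> x" using sym_dot[OF sym, of u x] by simp
      ultimately show "M *v x \<in> W" using less.prems(2) eig by (auto simp: W_def)
    qed
    have "u \<notin> W" using uu by (simp add: W_def)
    moreover have "W \<subseteq> V" by (auto simp: W_def)
    ultimately have "W \<subset> V" using uV by blast
    hence "dim W < dim V" using subW less.prems(1)
      by (intro dim_psubset) (simp add: span_eq_iff[THEN iffD2])
    from less.hyps[OF this subW invW] obtain B' where B':
      "B' \<subseteq> W" "finite B'" "pairwise orthogonal B'" "\<forall>b\<in>B'. norm b = 1 \<and> (\<exists>l. M *v b = l *\<^sub>R b)"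
      "span B' = W" by blast
    show ?thesis
    proof (intro exI[of _ "insert u B'"] conjI)
      show "insert u B' \<subseteq> V" using B'(1) uV by (auto simp: W_def)
      show "finite (insert u B')" using B'(2) by simp
      show "pairwise orthogonal (insert u B')"
        using B'(3) B'(1) by (auto simp: pairwise_insert orthogonal_def W_def inner_commute)
      show "\<forall>b\<in>insert u B'. norm b = 1 \<and> (\<exists>l. M *v b = l *\<^sub>R b)" using B'(4) nu eig by auto
      show "span (insert u B') = V"
      proof
        show "span (insert u B') \<subseteq> V" using \<open>insert u B' \<subseteq> V\<close> less.prems(1)
          by (simp add: span_minimal)
        show "V \<subseteq> span (insert u B')"
        proof
          fix x assume x: "x \<in> V"
          have "x - (u \<bullet> x) *\<^sub>R u \<in> W" using x uV uu less.prems(1)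
            by (auto simp: W_def subspace_diff subspace_scale inner_diff_right)
          hence "x - (u \<bullet> x) *\<^sub>R u \<in> span (insert u B')" using B'(5) span_mono[of B' "insert u B'"] by auto
          moreover have "(u \<bullet> x) *\<^sub>R u \<in> span (insert u B')" by (simp add: span_base span_mul)
          ultimately have "(x - (u \<bullet> x) *\<^sub>R u) + (u \<bullet> x) *\<^sub>R u \<in> span (insert u B')" by (rule span_add)
          thus "x \<in> span (insert u B')" by simp
        qed
      qed
    qed
  qed
qed

lemma spectral:
  fixes M :: "real^'n^'n"
  assumes sym: "transpose M = M"
  obtains B where "finite B" "pairwise orthogonal B" "\<forall>b\<in>B. norm b = 1"
    "\<forall>b\<in>B. M *v b = (b \<bullet> (M *v b)) *\<^sub>R b" "span B = UNIV"
proof -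
  obtain B where B: "finite B" "pairwise orthogonal B" "\<forall>b\<in>B. norm b = 1 \<and> (\<exists>l. M *v b = l *\<^sub>R b)"
    "span B = UNIV"
  proof -
    have "\<exists>B. B \<subseteq> UNIV \<and> finite B \<and> pairwise orthogonal B \<and> (\<forall>b\<in>B. norm b = 1 \<and> (\<exists>l. M *v b = l *\<^sub>R b)) \<and> span B = UNIV"
      by (rule spectral_subspace[OF sym]) (simp_all add: subspace_UNIV)
    then obtain B where "finite B \<and> pairwise orthogonal B \<and> (\<forall>b\<in>B. norm b = 1 \<and> (\<exists>l. M *v b = l *\<^sub>R b)) \<and> span B = UNIV"
      by blast
    thus ?thesis using that by blast
  qed
  have "M *v b = (b \<bullet> (M *v b)) *\<^sub>R b" if "b \<in> B" for b
  proof -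
    have "norm b = 1 \<and> (\<exists>l. M *v b = l *\<^sub>R b)" using B(3) that by (rule bspec)
    then obtain l where l: "M *v b = l *\<^sub>R b" and nb: "norm b = 1" by (elim conjE exE)
    have "b \<bullet> b = 1" using nb by (simp add: norm_eq_1)
    hence "b \<bullet> (M *v b) = l" using l by simp
    thus ?thesis using l by simp
  qed
  hence "\<forall>b\<in>B. M *v b = (b \<bullet> (M *v b)) *\<^sub>R b" by blast
  moreover have "\<forall>b\<in>B. norm b = 1" using B(3) by blast
  ultimately show ?thesis using B(1,2,4) by (rule_tac that) 
qed

lemma orthonormal_sum_inner:
  fixes B :: "('a::real_inner) set"
  assumes "finite B" "pairwise orthogonal B" "\<forall>b\<in>B. norm b = 1" "b0 \<in> B"
  shows "(\<Sum>b\<in>B. c b *\<^sub>R b) \<bullet> b0 = c b0"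
proof -
  have "(\<Sum>b\<in>B. c b *\<^sub>R b) \<bullet> b0 = (\<Sum>b\<in>B. c b * (b \<bullet> b0))"
    by (simp add: inner_sum_left)
  also have "\<dots> = (\<Sum>b\<in>B. if b = b0 then c b0 else 0)"
  proof (rule sum.cong)
    fix b assume "b \<in> B"
    show "c b * (b \<bullet> b0) = (if b = b0 then c b0 else 0)"
    proof (cases "b = b0")
      case True
      have "b0 \<bullet> b0 = 1" using assms(3,4) by (simp add: norm_eq_1)
      thus ?thesis using True by simp
    next
      case False
      hence "b \<bullet> b0 = 0" using assms(2) \<open>b \<in> B\<close> assms(4) by (auto simp: pairwise_def orthogonal_def)
      thus ?thesis using False by simp
    qed
  qed simp
  also have "\<dots> = c b0" using assms(1,4) by simp
  finally show ?thesis .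
qed

lemma orthonormal_expand:
  fixes B :: "('a::real_inner) set"
  assumes "finite B" "pairwise orthogonal B" "\<forall>b\<in>B. norm b = 1" "span B = UNIV"
  shows "x = (\<Sum>b\<in>B. (x \<bullet> b) *\<^sub>R b)"
proof -
  define y where "y = x - (\<Sum>b\<in>B. (x \<bullet> b) *\<^sub>R b)"
  have "orthogonal y b" if "b \<in> B" for b
    using orthonormal_sum_inner[OF assms(1-3) that, of "\<lambda>b. x \<bullet> b"]
    by (simp add: y_def orthogonal_def inner_diff_left)
  hence "orthogonal y y" using assms(4) by (intro orthogonal_to_span[of y B y]) auto
  hence "y = 0" by (simp add: orthogonal_def)
  thus ?thesis by (simp add: y_def)
qed

lemma orthonormal_sum_sum:
  fixes B :: "('a::real_inner) set"
  assumes "finite B" "pairwise orthogonal B" "\<forall>b\<in>B. norm b = 1"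
  shows "(\<Sum>b\<in>B. c b *\<^sub>R b) \<bullet> (\<Sum>b\<in>B. d b *\<^sub>R b) = (\<Sum>b\<in>B. c b * d b)"
proof -
  have "(\<Sum>b\<in>B. c b *\<^sub>R b) \<bullet> (\<Sum>b\<in>B. d b *\<^sub>R b) = (\<Sum>b\<in>B. d b * ((\<Sum>b\<in>B. c b *\<^sub>R b) \<bullet> b))"
    by (simp add: inner_sum_right)
  also have "\<dots> = (\<Sum>b\<in>B. c b * d b)"
    using orthonormal_sum_inner[OF assms] by (intro sum.cong) auto
  finally show ?thesis .
qed


lemma mv_sum:
  fixes A :: "real^'n^'m"
  shows "A *v (\<Sum>i\<in>S. f i) = (\<Sum>i\<in>S. A *v f i)"
  by (induction S rule: infinite_finite_induct) (simp_all add: matrix_vector_right_distrib)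

lemma gram_dot:
  fixes A :: "real^'d^'n"
  shows "x \<bullet> ((transpose A ** A) *v x) = (A *v x) \<bullet> (A *v x)"
proof -
  have "(transpose A ** A) *v x = (A *v x) v* A"
    by (simp add: matrix_vector_mul_assoc[symmetric])
  thus ?thesis by (metis dot_lmul_matrix inner_commute)
qed

lemma psd_sqrt_props:
  fixes H :: "real^'d^'d"
  assumes sym: "transpose H = H" and pd: "\<forall>x. x \<noteq> 0 \<longrightarrow> 0 < x \<bullet> (H *v x)"
  shows "transpose (psd_sqrt H) = psd_sqrt H \<and> psd_sqrt H ** psd_sqrt H = H"
proof -
  obtain B where B: "finite B" "pairwise orthogonal B" "\<forall>b\<in>B. norm b = 1"
    "\<forall>b\<in>B. H *v b = (b \<bullet> (H *v b)) *\<^sub>R b" "span B = UNIV"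
    using spectral[OF sym] by blast
  define lam where "lam b = b \<bullet> (H *v b)" for b
  have lampos: "lam b > 0" if "b \<in> B" for b
  proof -
    have "b \<noteq> 0" using B(3) that by auto
    thus ?thesis using pd by (simp add: lam_def)
  qed
  have Hb: "H *v b = lam b *\<^sub>R b" if "b \<in> B" for b using B(4) that by (simp add: lam_def)
  define f where "f x = (\<Sum>b\<in>B. (sqrt (lam b) * (x \<bullet> b)) *\<^sub>R b)" for x
  have lin: "linear f"
    by (rule linearI) (simp_all add: f_def inner_add_left scaleR_sum_right sum.distrib[symmetric]
        algebra_simps scaleR_add_left)
  define R where "R = matrix f"
  have Rx: "R *v x = f x" for x using lin by (simp add: R_def matrix_works linear_linear)
  have fb: "f x \<bullet> b = sqrt (lam b) * (x \<bullet> b)" if "b \<in> B" for x b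
    unfolding f_def by (rule orthonormal_sum_inner[OF B(1-3) that])
  have exp: "x = (\<Sum>b\<in>B. (x \<bullet> b) *\<^sub>R b)" for x by (rule orthonormal_expand[OF B(1,2,3,5)])
  have Rsym: "transpose R = R"
  proof (rule sym_from_dot)
    fix x y
    have "(R *v x) \<bullet> y = (\<Sum>b\<in>B. sqrt (lam b) * (x \<bullet> b) * (b \<bullet> y))"
      by (simp add: Rx f_def inner_sum_left)
    also have "\<dots> = (\<Sum>b\<in>B. sqrt (lam b) * (y \<bullet> b) * (x \<bullet> b))"
      by (intro sum.cong) (simp_all add: inner_commute)
    also have "\<dots> = x \<bullet> (R *v y)"
      by (simp add: Rx f_def inner_sum_right)
    finally show "(R *v x) \<bullet> y = x \<bullet> (R *v y)" .
  qed
  have Rpsd: "\<forall>x. 0 \<le> x \<bullet> (R *v x)"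
  proof
    fix x
    have "x \<bullet> (R *v x) = (\<Sum>b\<in>B. sqrt (lam b) * (x \<bullet> b) * (x \<bullet> b))"
      by (simp add: Rx f_def inner_sum_right inner_commute)
    also have "\<dots> \<ge> 0" using lampos
      by (intro sum_nonneg) (simp add: mult.assoc less_imp_le)
    finally show "0 \<le> x \<bullet> (R *v x)" .
  qed
  have RR: "R ** R = H"
  proof (subst matrix_eq, rule allI)
    fix x
    have "(R ** R) *v x = f (f x)" by (simp add: matrix_vector_mul_assoc[symmetric] Rx)
    also have "\<dots> = (\<Sum>b\<in>B. (lam b * (x \<bullet> b)) *\<^sub>R b)"
      unfolding f_def[of "f x"] using lampos
      by (intro sum.cong) (simp_all add: fb mult.assoc[symmetric] less_imp_le)
    also have "\<dots> = (\<Sum>b\<in>B. (x \<bullet> b) *\<^sub>R (H *v b))"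
      by (intro sum.cong) (simp_all add: Hb)
    also have "\<dots> = H *v (\<Sum>b\<in>B. (x \<bullet> b) *\<^sub>R b)" by (simp add: mv_sum matrix_vector_mult_scaleR)
    also have "\<dots> = H *v x" using exp[of x] by simp
    finally show "(R ** R) *v x = H *v x" .
  qed
  have uniq: "R' = R" if R': "transpose R' = R'" "\<forall>x. 0 \<le> x \<bullet> (R' *v x)" "R' ** R' = H" for R'
  proof -
    have R'b: "R' *v b = sqrt (lam b) *\<^sub>R b" if b: "b \<in> B" for b
    proof -
      define \<mu> where "\<mu> = sqrt (lam b)"
      have mu: "\<mu> > 0" "\<mu> * \<mu> = lam b" using lampos[OF b] by (simp_all add: \<mu>_def)
      define z where "z = R' *v b - \<mu> *\<^sub>R b"
      have "R' *v (R' *v b) = lam b *\<^sub>R b"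
        using R'(3) Hb[OF b] by (simp add: matrix_vector_mul_assoc)
      hence "R' *v z = - \<mu> *\<^sub>R z"
        by (simp add: z_def matrix_vector_mult_diff_distrib matrix_vector_mult_scaleR algebra_simps
            mu(2)[symmetric])
      hence "z \<bullet> (R' *v z) = - \<mu> * (z \<bullet> z)" by simp
      moreover have "0 \<le> z \<bullet> (R' *v z)" using R'(2) by blast
      ultimately have "\<mu> * (z \<bullet> z) \<le> 0" by linarith
      hence "z \<bullet> z \<le> 0" using mu(1) by (simp add: mult_le_0_iff)
      hence "z = 0" by (metis inner_eq_zero_iff inner_ge_zero order_antisym)
      thus ?thesis by (simp add: z_def \<mu>_def)
    qed
    show ?thesis
    proof (subst matrix_eq, rule allI)
      fix x
      have "R' *v x = R' *v (\<Sum>b\<in>B. (x \<bullet> b) *\<^sub>R b)" using exp[of x] by simp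
      also have "\<dots> = (\<Sum>b\<in>B. (x \<bullet> b) *\<^sub>R (R' *v b))"
        by (simp add: mv_sum matrix_vector_mult_scaleR)
      also have "\<dots> = f x" unfolding f_def by (intro sum.cong) (simp_all add: R'b)
      finally show "R' *v x = R *v x" by (simp add: Rx)
    qed
  qed
  have "psd_sqrt H = R"
    unfolding psd_sqrt_def
  proof (rule the_equality)
    show "transpose R = R \<and> (\<forall>x. 0 \<le> x \<bullet> (R *v x)) \<and> R ** R = H"
      using Rsym Rpsd RR by blast
    fix R' assume "transpose R' = R' \<and> (\<forall>x. 0 \<le> x \<bullet> (R' *v x)) \<and> R' ** R' = H"
    thus "R' = R" using uniq by blast
  qed
  thus ?thesis using Rsym RR by simp
qed


lemma sigma_bound:
  fixes A :: "real^'d^'n"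
  shows "(A *v x) \<bullet> (A *v x) \<le> (sigma_max A)^2 * (x \<bullet> x)"
proof -
  define G where "G = transpose A ** A"
  have sym: "transpose G = G" by (simp add: G_def matrix_transpose_mul)
  obtain B where B: "finite B" "pairwise orthogonal B" "\<forall>b\<in>B. norm b = 1"
    "\<forall>b\<in>B. G *v b = (b \<bullet> (G *v b)) *\<^sub>R b" "span B = UNIV"
    using spectral[OF sym] by blast
  define lam where "lam b = b \<bullet> (G *v b)" for b
  have lam0: "lam b \<ge> 0" for b by (simp add: lam_def G_def gram_dot)
  have Gb: "G *v b = lam b *\<^sub>R b" if "b \<in> B" for b using B(4) that by (simp add: lam_def)
  have exp: "x = (\<Sum>b\<in>B. (x \<bullet> b) *\<^sub>R b)" for x by (rule orthonormal_expand[OF B(1,2,3,5)])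
  define L where "L = {l. \<exists>v. v \<noteq> 0 \<and> (transpose A ** A) *v v = l *\<^sub>R v}"
  have Lsub: "L \<subseteq> lam ` B"
  proof
    fix l assume "l \<in> L"
    then obtain v where v: "v \<noteq> 0" "G *v v = l *\<^sub>R v" by (auto simp: L_def G_def)
    have "\<exists>b\<in>B. v \<bullet> b \<noteq> 0"
    proof (rule ccontr)
      assume "\<not> ?thesis"
      hence "(\<Sum>b\<in>B. (v \<bullet> b) *\<^sub>R b) = 0" by simp
      thus False using exp[of v] v(1) by simp
    qed
    then obtain b where b: "b \<in> B" "v \<bullet> b \<noteq> 0" by blast
    have "(G *v v) \<bullet> b = v \<bullet> (G *v b)" by (rule sym_dot[OF sym])
    hence "l * (v \<bullet> b) = lam b * (v \<bullet> b)" using v(2) Gb[OF b(1)] by simp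
    hence "l = lam b" using b(2) by simp
    thus "l \<in> lam ` B" using b(1) by blast
  qed
  have finL: "finite L" using Lsub B(1) finite_surj by blast
  have lamL: "lam b \<in> L" if "b \<in> B" for b
  proof -
    have "b \<noteq> 0" using B(3) that by auto
    thus ?thesis using Gb[OF that] by (auto simp: L_def G_def)
  qed
  have Bne: "B \<noteq> {}"
  proof
    assume "B = {}"
    hence "(axis undefined 1 :: real^'d) = 0" using exp[of "axis undefined 1"] by simp
    thus False by (simp add: axis_eq_0_iff)
  qed
  then obtain b0 where b0: "b0 \<in> B" by blast
  have MaxL: "lam b \<le> Max L" if "b \<in> B" for b using finL lamL[OF that] by simp
  have Max0: "Max L \<ge> 0" using MaxL[OF b0] lam0[of b0] by linarith
  have sig: "(sigma_max A)^2 = Max L" unfolding sigma_max_def L_def[symmetric] using Max0 by simp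
  have "(A *v x) \<bullet> (A *v x) = x \<bullet> (G *v x)" by (simp add: G_def gram_dot)
  also have "G *v x = (\<Sum>b\<in>B. (lam b * (x \<bullet> b)) *\<^sub>R b)"
  proof -
    have "G *v x = G *v (\<Sum>b\<in>B. (x \<bullet> b) *\<^sub>R b)" using exp[of x] by simp
    also have "\<dots> = (\<Sum>b\<in>B. (lam b * (x \<bullet> b)) *\<^sub>R b)"
      by (simp add: mv_sum matrix_vector_mult_scaleR Gb mult.commute)
    finally show ?thesis .
  qed
  also have "x \<bullet> \<dots> = (\<Sum>b\<in>B. (x \<bullet> b) * (lam b * (x \<bullet> b)))"
  proof -
    have "x \<bullet> (\<Sum>b\<in>B. (lam b * (x \<bullet> b)) *\<^sub>R b) =
       (\<Sum>b\<in>B. (x \<bullet> b) *\<^sub>R b) \<bullet> (\<Sum>b\<in>B. (lam b * (x \<bullet> b)) *\<^sub>R b)"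
      using exp[of x] by simp
    also have "\<dots> = (\<Sum>b\<in>B. (x \<bullet> b) * (lam b * (x \<bullet> b)))"
      by (rule orthonormal_sum_sum[OF B(1-3)])
    finally show ?thesis .
  qed
  also have "\<dots> \<le> (\<Sum>b\<in>B. Max L * ((x \<bullet> b) * (x \<bullet> b)))"
  proof (rule sum_mono)
    fix b assume "b \<in> B"
    have "lam b * ((x \<bullet> b) * (x \<bullet> b)) \<le> Max L * ((x \<bullet> b) * (x \<bullet> b))"
      using MaxL[OF \<open>b \<in> B\<close>] by (intro mult_right_mono) auto
    thus "(x \<bullet> b) * (lam b * (x \<bullet> b)) \<le> Max L * ((x \<bullet> b) * (x \<bullet> b))" by (simp add: algebra_simps)
  qed
  also have "\<dots> = Max L * (x \<bullet> x)"
  proof -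
    have "x \<bullet> x = (\<Sum>b\<in>B. (x \<bullet> b) *\<^sub>R b) \<bullet> (\<Sum>b\<in>B. (x \<bullet> b) *\<^sub>R b)"
      using exp[of x] by simp
    also have "\<dots> = (\<Sum>b\<in>B. (x \<bullet> b) * (x \<bullet> b))" by (rule orthonormal_sum_sum[OF B(1-3)])
    finally show ?thesis by (simp add: sum_distrib_left)
  qed
  finally show ?thesis using sig by simp
qed

lemma matrix_inv_props:
  fixes P :: "real^'n^'n"
  assumes "invertible P"
  shows "P ** matrix_inv P = mat 1" "matrix_inv P ** P = mat 1"
proof -
  have "\<exists>P'. P ** P' = mat 1 \<and> P' ** P = mat 1" using assms by (simp add: invertible_def)
  hence "P ** matrix_inv P = mat 1 \<and> matrix_inv P ** P = mat 1"
    unfolding matrix_inv_def by (rule someI_ex)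
  thus "P ** matrix_inv P = mat 1" "matrix_inv P ** P = mat 1" by auto
qed

lemma matrix_inv_mv:
  fixes P :: "real^'n^'n"
  assumes "invertible P"
  shows "P *v (matrix_inv P *v x) = x" "matrix_inv P *v (P *v x) = x"
  using matrix_inv_props[OF assms] by (simp_all add: matrix_vector_mul_assoc)

lemma pd_invertible:
  fixes P :: "real^'n^'n"
  assumes "\<forall>x. x \<noteq> 0 \<longrightarrow> 0 < x \<bullet> (P *v x)"
  shows "invertible P"
proof -
  have "\<forall>x. P *v x = 0 \<longrightarrow> x = 0" using assms by (metis inner_zero_right less_irrefl)
  hence "\<exists>B. B ** P = mat 1" by (simp add: matrix_left_invertible_ker)
  thus ?thesis by (simp add: invertible_left_inverse)
qed

lemma var_bound:
  fixes Q :: "real^'n^'n"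
  assumes sym: "transpose Q = Q" and psd: "\<forall>x. 0 \<le> x \<bullet> (Q *v x)" and inv: "invertible Q"
  shows "2 * (g \<bullet> y) - y \<bullet> (Q *v y) \<le> g \<bullet> (matrix_inv Q *v g)"
proof -
  define z where "z = matrix_inv Q *v g"
  have gz: "g = Q *v z" by (simp add: z_def matrix_inv_mv[OF inv])
  have "0 \<le> (z - y) \<bullet> (Q *v (z - y))" using psd by blast
  also have "\<dots> = z \<bullet> (Q *v z) - 2 * ((Q *v z) \<bullet> y) + y \<bullet> (Q *v y)"
    using sym_dot[OF sym, of z y] sym_dot[OF sym, of y z]
    by (simp add: matrix_vector_mult_diff_distrib inner_diff_left inner_diff_right inner_commute)
  finally have "2 * ((Q *v z) \<bullet> y) - y \<bullet> (Q *v y) \<le> z \<bullet> (Q *v z)" by simp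
  moreover have "g \<bullet> (matrix_inv Q *v g) = g \<bullet> z" by (simp add: z_def)
  moreover have "g \<bullet> z = z \<bullet> (Q *v z)" by (simp add: gz inner_commute)
  ultimately show ?thesis using gz by simp
qed

lemma inv_compare:
  fixes P Q :: "real^'n^'n"
  assumes invP: "invertible P"
    and sym: "transpose Q = Q" and psd: "\<forall>x. 0 \<le> x \<bullet> (Q *v x)" and invQ: "invertible Q"
    and a: "a > 0" and cmp: "\<forall>x. a * (x \<bullet> (Q *v x)) \<le> x \<bullet> (P *v x)"
  shows "g \<bullet> (matrix_inv P *v g) \<le> g \<bullet> (matrix_inv Q *v g) / a"
proof -
  define x where "x = matrix_inv P *v g"
  have Px: "P *v x = g" by (simp add: x_def matrix_inv_mv[OF invP])
  have h0: "2 * (g \<bullet> (a *\<^sub>R x)) - (a *\<^sub>R x) \<bullet> (Q *v (a *\<^sub>R x)) \<le> g \<bullet> (matrix_inv Q *v g)"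
    by (rule var_bound[OF sym psd invQ])
  have "(a *\<^sub>R x) \<bullet> (Q *v (a *\<^sub>R x)) = a * (a * (x \<bullet> (Q *v x)))"
    by (simp add: matrix_vector_mult_scaleR)
  hence "2 * (a * (g \<bullet> x)) - a * (a * (x \<bullet> (Q *v x))) \<le> g \<bullet> (matrix_inv Q *v g)"
    using h0 by (simp add: matrix_vector_mult_scaleR)
  moreover have "x \<bullet> (P *v x) = g \<bullet> x" by (simp add: Px inner_commute)
  hence "a * (a * (x \<bullet> (Q *v x))) \<le> a * (g \<bullet> x)"
    using cmp a by (metis less_imp_le mult_left_mono)
  ultimately have "a * (g \<bullet> x) \<le> g \<bullet> (matrix_inv Q *v g)" by linarith
  hence "g \<bullet> x \<le> g \<bullet> (matrix_inv Q *v g) / a" using a by (simp add: field_simps)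
  thus ?thesis by (simp add: x_def)
qed

lemma dot_rmul:
  fixes A :: "real^'d^'n"
  shows "x \<bullet> (w v* A) = (A *v x) \<bullet> w"
  by (metis dot_lmul_matrix inner_commute)

lemma tA_dot:
  fixes A :: "real^'d^'n"
  shows "(transpose A *v w) \<bullet> y = w \<bullet> (A *v y)"
  by (simp add: dot_lmul_matrix)

lemma sg_mv:
  "sketch_gram m S *v y = (\<Sum>i<m. (S i \<bullet> y) *\<^sub>R S i)"
proof -
  have "(sketch_gram m S *v y) $ j = (\<Sum>i<m. (S i \<bullet> y) *\<^sub>R S i) $ j" for j
  proof -
    have "(sketch_gram m S *v y) $ j = (\<Sum>k\<in>UNIV. (\<Sum>i<m. S i $ j * S i $ k) * y $ k)"
      by (simp add: matrix_vector_mult_def sketch_gram_def)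
    also have "\<dots> = (\<Sum>k\<in>UNIV. \<Sum>i<m. S i $ j * (S i $ k * y $ k))"
      by (simp add: sum_distrib_right mult.assoc)
    also have "\<dots> = (\<Sum>i<m. \<Sum>k\<in>UNIV. S i $ j * (S i $ k * y $ k))"
      by (rule sum.swap)
    also have "\<dots> = (\<Sum>i<m. (S i \<bullet> y) * S i $ j)"
      by (simp add: inner_vec_def sum_distrib_left mult.commute)
    also have "\<dots> = (\<Sum>i<m. (S i \<bullet> y) *\<^sub>R S i) $ j"
      by (simp add: sum_component)
    finally show ?thesis .
  qed
  thus ?thesis by (simp add: vec_eq_iff)
qed

lemma sg_psd: "0 \<le> y \<bullet> (sketch_gram m S *v y)"
  by (simp add: sg_mv inner_sum_right sum_nonneg inner_commute)

lemma sg_sym: "transpose (sketch_gram m S) = sketch_gram m S"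
  by (simp add: transpose_def sketch_gram_def vec_eq_iff mult.commute)

lemma Lam_sym:
  fixes \<Lambda> :: "real^'d^'d"
  assumes "\<forall>i j. i \<noteq> j \<longrightarrow> \<Lambda> $ i $ j = 0"
  shows "transpose \<Lambda> = \<Lambda>"
proof -
  have "\<Lambda> $ j $ i = \<Lambda> $ i $ j" for i j using assms by (cases "i = j") auto
  thus ?thesis by (simp add: transpose_def vec_eq_iff)
qed

lemma H_mv: "Hmat A \<Lambda> \<nu> *v x = transpose A *v (A *v x) + \<nu>^2 *\<^sub>R (\<Lambda> *v x)"
  by (simp add: Hmat_def matrix_vector_mult_add_rdistrib matrix_vector_mul_assoc[symmetric]
      scaleR_matrix_vector_assoc)


lemma HS_mv: "HSmat A \<Lambda> \<nu> m S *v x = transpose A *v (sketch_gram m S *v (A *v x)) + \<nu>^2 *\<^sub>R (\<Lambda> *v x)"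
  by (simp add: HSmat_def matrix_vector_mult_add_rdistrib matrix_vector_mul_assoc[symmetric]
      scaleR_matrix_vector_assoc)

lemma len_pfom [simp]: "length (pfom_list \<psi> P x0 t) = Suc t"
  by (induction t) auto

lemma pfom_nth_le: "s \<le> t \<Longrightarrow> pfom_list \<psi> P x0 t ! s = pfom_list \<psi> P x0 s ! s"
proof (induction t)
  case 0 thus ?case by simp
next
  case (Suc t)
  show ?case
  proof (cases "s = Suc t")
    case True thus ?thesis by simp
  next
    case False
    hence "s \<le> t" using Suc.prems by simp
    thus ?thesis using Suc.IH by (simp add: nth_append)
  qed
qed

lemma pfom_last: "pfom_list \<psi> P x0 (Suc t) ! Suc t = \<psi> t (pfom_list \<psi> P x0 t) P"
  by (simp add: nth_append)

lemma pfom_0: "pfom_list \<psi> P x0 t ! 0 = x0"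
  using pfom_nth_le[of 0 t] by simp

context
  fixes A :: "real^'d^'n" and b :: "real^'d" and \<Lambda> :: "real^'d^'d" and \<nu> :: real
  assumes Lsym: "transpose \<Lambda> = \<Lambda>" and Lge: "\<forall>x. x \<bullet> x \<le> x \<bullet> (\<Lambda> *v x)" and nupos: "\<nu> > 0"
begin

lemma qH: "x \<bullet> (Hmat A \<Lambda> \<nu> *v x) = (A *v x) \<bullet> (A *v x) + \<nu>^2 * (x \<bullet> (\<Lambda> *v x))"
  by (simp add: H_mv inner_add_right dot_rmul)

lemma qHS: "x \<bullet> (HSmat A \<Lambda> \<nu> m S *v x) = (A *v x) \<bullet> (sketch_gram m S *v (A *v x)) + \<nu>^2 * (x \<bullet> (\<Lambda> *v x))"
  by (simp add: HS_mv inner_add_right dot_rmul dot_lmul_matrix)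

lemma H_sym: "transpose (Hmat A \<Lambda> \<nu>) = Hmat A \<Lambda> \<nu>"
proof (rule sym_from_dot)
  fix x y
  show "(Hmat A \<Lambda> \<nu> *v x) \<bullet> y = x \<bullet> (Hmat A \<Lambda> \<nu> *v y)"
    using sym_dot[OF Lsym, of x y]
    by (simp add: H_mv inner_add_right inner_add_left dot_lmul_matrix dot_rmul)
qed

lemma HS_sym: "transpose (HSmat A \<Lambda> \<nu> m S) = HSmat A \<Lambda> \<nu> m S"
proof (rule sym_from_dot)
  fix x y
  show "(HSmat A \<Lambda> \<nu> m S *v x) \<bullet> y = x \<bullet> (HSmat A \<Lambda> \<nu> m S *v y)"
    using sym_dot[OF Lsym, of x y] sym_dot[OF sg_sym, of m S "A *v x" "A *v y"]
    by (simp add: HS_mv inner_add_right inner_add_left dot_lmul_matrix dot_rmul)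
qed

lemma H_lb: "\<nu>^2 * (x \<bullet> x) \<le> x \<bullet> (Hmat A \<Lambda> \<nu> *v x)"
proof -
  have "\<nu>^2 * (x \<bullet> x) \<le> \<nu>^2 * (x \<bullet> (\<Lambda> *v x))" using Lge by (intro mult_left_mono) auto
  thus ?thesis unfolding qH by (simp add: add_increasing)
qed

lemma HS_lb: "\<nu>^2 * (x \<bullet> (\<Lambda> *v x)) \<le> x \<bullet> (HSmat A \<Lambda> \<nu> m S *v x)"
  unfolding qHS using sg_psd by simp

lemma HS_lb2: "\<nu>^2 * (x \<bullet> x) \<le> x \<bullet> (HSmat A \<Lambda> \<nu> m S *v x)"
proof -
  have "\<nu>^2 * (x \<bullet> x) \<le> \<nu>^2 * (x \<bullet> (\<Lambda> *v x))" using Lge by (intro mult_left_mono) auto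
  thus ?thesis using HS_lb[of x m S] by linarith
qed

lemma H_pd: "\<forall>x. x \<noteq> 0 \<longrightarrow> 0 < x \<bullet> (Hmat A \<Lambda> \<nu> *v x)"
proof (intro allI impI)
  fix x :: "real^'d" assume "x \<noteq> 0"
  hence "0 < \<nu>^2 * (x \<bullet> x)" using nupos by simp
  thus "0 < x \<bullet> (Hmat A \<Lambda> \<nu> *v x)" using H_lb[of x] by linarith
qed

lemma HS_pd: "\<forall>x. x \<noteq> 0 \<longrightarrow> 0 < x \<bullet> (HSmat A \<Lambda> \<nu> m S *v x)"
proof (intro allI impI)
  fix x :: "real^'d" assume "x \<noteq> 0"
  hence "0 < \<nu>^2 * (x \<bullet> x)" using nupos by simp
  thus "0 < x \<bullet> (HSmat A \<Lambda> \<nu> m S *v x)" using HS_lb2[of x m S] by linarith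
qed

lemma H_psd: "\<forall>x. 0 \<le> x \<bullet> (Hmat A \<Lambda> \<nu> *v x)"
  using H_pd by (metis inner_zero_left order.refl less_imp_le)

lemma HS_psd: "\<forall>x. 0 \<le> x \<bullet> (HSmat A \<Lambda> \<nu> m S *v x)"
  using HS_pd by (metis inner_zero_left order.refl less_imp_le)

lemma H_inv: "invertible (Hmat A \<Lambda> \<nu>)" by (rule pd_invertible[OF H_pd])
lemma HS_inv: "invertible (HSmat A \<Lambda> \<nu> m S)" by (rule pd_invertible[OF HS_pd])

lemma HS_posdef: "pos_def (HSmat A \<Lambda> \<nu> m S)"
  unfolding pos_def_def using HS_sym HS_pd by blast

lemma H_le_kappa:
  "x \<bullet> (Hmat A \<Lambda> \<nu> *v x) \<le> ((sigma_max A)^2 + \<nu>^2) / \<nu>^2 * (x \<bullet> (HSmat A \<Lambda> \<nu> m S *v x))"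
proof -
  define q where "q = x \<bullet> (\<Lambda> *v x)"
  have "(A *v x) \<bullet> (A *v x) \<le> (sigma_max A)^2 * (x \<bullet> x)" by (rule sigma_bound)
  also have "\<dots> \<le> (sigma_max A)^2 * q" using Lge by (intro mult_left_mono) (auto simp: q_def)
  finally have "x \<bullet> (Hmat A \<Lambda> \<nu> *v x) \<le> ((sigma_max A)^2 + \<nu>^2) * q"
    unfolding qH q_def[symmetric] by (simp add: algebra_simps)
  also have "\<dots> = ((sigma_max A)^2 + \<nu>^2) / \<nu>^2 * (\<nu>^2 * q)" using nupos by simp
  also have "\<dots> \<le> ((sigma_max A)^2 + \<nu>^2) / \<nu>^2 * (x \<bullet> (HSmat A \<Lambda> \<nu> m S *v x))"
    using HS_lb[of x m S] nupos by (intro mult_left_mono) (auto simp: q_def)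
  finally show ?thesis .
qed

lemma Hxstar: "Hmat A \<Lambda> \<nu> *v xstar A b \<Lambda> \<nu> = b"
  by (simp add: xstar_def matrix_inv_mv[OF H_inv])

lemma grad_eq: "grad_f A b \<Lambda> \<nu> x = Hmat A \<Lambda> \<nu> *v (x - xstar A b \<Lambda> \<nu>)"
  by (simp add: grad_f_def matrix_vector_mult_diff_distrib Hxstar)

lemma subopt_eq: "subopt A b \<Lambda> \<nu> x = 1/2 * (grad_f A b \<Lambda> \<nu> x \<bullet> (matrix_inv (Hmat A \<Lambda> \<nu>) *v grad_f A b \<Lambda> \<nu> x))"
  unfolding grad_eq matrix_inv_mv[OF H_inv] subopt_def
  by (simp add: inner_commute)

lemma subopt_nonneg: "0 \<le> subopt A b \<Lambda> \<nu> x"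
  unfolding subopt_def using H_psd by simp

lemma subopt_zero: "subopt A b \<Lambda> \<nu> x = 0 \<Longrightarrow> grad_f A b \<Lambda> \<nu> x = 0"
proof -
  assume "subopt A b \<Lambda> \<nu> x = 0"
  hence "(x - xstar A b \<Lambda> \<nu>) \<bullet> (Hmat A \<Lambda> \<nu> *v (x - xstar A b \<Lambda> \<nu>)) = 0" by (simp add: subopt_def)
  hence "x - xstar A b \<Lambda> \<nu> = 0" using H_pd by (metis less_irrefl)
  thus ?thesis by (simp add: grad_eq)
qed

lemma dtil_nonneg: "0 \<le> dtil A b \<Lambda> \<nu> (HSmat A \<Lambda> \<nu> m S) x"
  unfolding dtil_def using var_bound[OF HS_sym HS_psd HS_inv, of _ 0] by simp

lemma subopt_le_dtil:
  assumes e: "e \<ge> 0" and up: "\<forall>x. x \<bullet> (HSmat A \<Lambda> \<nu> m S *v x) \<le> (1 + e) * (x \<bullet> (Hmat A \<Lambda> \<nu> *v x))"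
  shows "subopt A b \<Lambda> \<nu> x \<le> (1 + e) * dtil A b \<Lambda> \<nu> (HSmat A \<Lambda> \<nu> m S) x"
proof -
  have "\<forall>y. 1 / (1 + e) * (y \<bullet> (HSmat A \<Lambda> \<nu> m S *v y)) \<le> y \<bullet> (Hmat A \<Lambda> \<nu> *v y)"
    using up e by (simp add: field_simps)
  from inv_compare[OF H_inv HS_sym HS_psd HS_inv _ this]
  show ?thesis using e unfolding subopt_eq dtil_def by (simp add: mult.commute)
qed

lemma dtil_le_subopt:
  assumes a: "a > 0" and lo: "\<forall>x. a * (x \<bullet> (Hmat A \<Lambda> \<nu> *v x)) \<le> x \<bullet> (HSmat A \<Lambda> \<nu> m S *v x)"
  shows "dtil A b \<Lambda> \<nu> (HSmat A \<Lambda> \<nu> m S) x \<le> subopt A b \<Lambda> \<nu> x / a"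
proof -
  from inv_compare[OF HS_inv H_sym H_psd H_inv a lo]
  show ?thesis unfolding subopt_eq dtil_def by simp
qed

end

context
  fixes A :: "real^'d^'n" and b :: "real^'d" and \<Lambda> :: "real^'d^'d" and \<nu> :: real
  assumes Lsym: "transpose \<Lambda> = \<Lambda>" and Lge: "\<forall>x. x \<bullet> x \<le> x \<bullet> (\<Lambda> *v x)" and nupos: "\<nu> > 0"
begin

lemma event_bound:
  assumes ev: "sketch_event A \<Lambda> \<nu> \<rho> m S"
  shows "\<bar>x \<bullet> (HSmat A \<Lambda> \<nu> m S *v x) - x \<bullet> (Hmat A \<Lambda> \<nu> *v x)\<bar> \<le> max (sqrt \<rho>) \<rho> * (x \<bullet> (Hmat A \<Lambda> \<nu> *v x))"
proof -
  define H where "H = Hmat A \<Lambda> \<nu>"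
  define HS where "HS = HSmat A \<Lambda> \<nu> m S"
  define R where "R = psd_sqrt H"
  have Hsym: "transpose H = H" unfolding H_def by (rule H_sym[OF Lsym Lge nupos])
  have Hpd: "\<forall>x. x \<noteq> 0 \<longrightarrow> 0 < x \<bullet> (H *v x)" unfolding H_def by (rule H_pd[OF Lsym Lge nupos])
  have Hinv: "invertible H" unfolding H_def by (rule H_inv[OF Lsym Lge nupos])
  have Rsym: "transpose R = R" and RR: "R ** R = H"
    using psd_sqrt_props[OF Hsym Hpd] by (simp_all add: R_def)
  have "(matrix_inv H ** R) ** R = mat 1"
    by (metis matrix_mul_assoc RR matrix_inv_props(2)[OF Hinv])
  hence Rinv: "invertible R" by (auto simp: invertible_left_inverse)
  define Ri where "Ri = matrix_inv R"
  define C where "C = Ri ** HS ** Ri"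
  have C_def': "CSmat A \<Lambda> \<nu> m S = C" by (simp add: CSmat_def C_def Ri_def R_def H_def HS_def)
  define \<epsilon> where "\<epsilon> = max (sqrt \<rho>) \<rho>"
  have sn: "onorm (\<lambda>v. (C - mat 1) *v v) \<le> \<epsilon>"
    using ev by (simp add: sketch_event_def spec_norm_def C_def' \<epsilon>_def)
  define y where "y = R *v x"
  have Cy: "C *v y = Ri *v (HS *v x)"
    by (simp add: C_def y_def matrix_vector_mul_assoc[symmetric] Ri_def matrix_inv_mv[OF Rinv])
  have "y \<bullet> (C *v y) = (R *v x) \<bullet> (Ri *v (HS *v x))" using Cy by (simp only: y_def)
  also have "\<dots> = x \<bullet> (R *v (Ri *v (HS *v x)))" by (rule sym_dot[OF Rsym])
  also have "\<dots> = x \<bullet> (HS *v x)" by (simp add: Ri_def matrix_inv_mv[OF Rinv])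
  finally have yCy: "y \<bullet> (C *v y) = x \<bullet> (HS *v x)" .
  have "y \<bullet> y = x \<bullet> (R *v (R *v x))" unfolding y_def by (rule sym_dot[OF Rsym])
  hence yy: "y \<bullet> y = x \<bullet> (H *v x)" by (simp add: matrix_vector_mul_assoc RR)
  have "\<bar>y \<bullet> ((C - mat 1) *v y)\<bar> \<le> norm y * norm ((C - mat 1) *v y)"
    by (rule Cauchy_Schwarz_ineq2)
  also have "\<dots> \<le> norm y * (onorm (\<lambda>v. (C - mat 1) *v v) * norm y)"
    by (intro mult_left_mono onorm matrix_vector_mul_bounded_linear) simp
  also have "\<dots> \<le> norm y * (\<epsilon> * norm y)"
    using sn by (intro mult_left_mono mult_right_mono) auto
  also have "\<dots> = \<epsilon> * (y \<bullet> y)" by (simp add: power2_norm_eq_inner[symmetric] power2_eq_square)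
  finally have "\<bar>y \<bullet> (C *v y) - y \<bullet> y\<bar> \<le> \<epsilon> * (y \<bullet> y)"
    by (simp add: matrix_vector_mult_diff_rdistrib inner_diff_right)
  thus ?thesis unfolding yCy yy H_def HS_def \<epsilon>_def .
qed

end

lemma pfom_const:
  assumes pf: "is_pfom A b \<Lambda> \<nu> \<psi>" and P: "pos_def P" and g: "grad_f A b \<Lambda> \<nu> x0 = 0"
  shows "\<forall>s\<le>t. pfom_list \<psi> P x0 t ! s = x0"
proof (induction t)
  case 0 thus ?case by simp
next
  case (Suc t)
  have setx: "set (pfom_list \<psi> P x0 t) \<subseteq> {x0}"
    using Suc.IH by (auto simp: set_conv_nth)
  hence "grad_f A b \<Lambda> \<nu> ` set (pfom_list \<psi> P x0 t) \<subseteq> {0}" using g by auto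
  hence sp: "span (grad_f A b \<Lambda> \<nu> ` set (pfom_list \<psi> P x0 t)) \<subseteq> {0}"
    by (metis span_empty span_insert_0 span_mono subset_singletonD)
  have "pfom_list \<psi> P x0 (Suc t) ! Suc t \<in>
       (\<lambda>v. x0 + matrix_inv P *v v) ` span (grad_f A b \<Lambda> \<nu> ` set (pfom_list \<psi> P x0 t))"
    using pf P unfolding is_pfom_def by blast
  hence last: "pfom_list \<psi> P x0 (Suc t) ! Suc t = x0" using sp by auto
  show ?case
  proof (intro allI impI)
    fix s assume "s \<le> Suc t"
    show "pfom_list \<psi> P x0 (Suc t) ! s = x0"
    proof (cases "s = Suc t")
      case True thus ?thesis using last by simp
    next
      case False
      hence "s \<le> t" using \<open>s \<le> Suc t\<close> by simp
      thus ?thesis using Suc.IH by (simp add: nth_append)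
    qed
  qed
qed


context
  fixes A :: "real^'d^'n" and b :: "real^'d" and \<Lambda> :: "real^'d^'d" and \<nu> :: real
    and \<psi> :: "'d pfom" and \<rho> \<alpha> r c F :: real and K m_init T :: nat
    and \<omega> :: "nat \<Rightarrow> nat \<Rightarrow> real^'n" and x0 :: "real^'d"
  assumes Lsym: "transpose \<Lambda> = \<Lambda>" and Lge: "\<forall>x. x \<bullet> x \<le> x \<bullet> (\<Lambda> *v x)" and nupos: "\<nu> > 0"
    and pf: "is_pfom A b \<Lambda> \<nu> \<psi>"
    and lc: "lin_conv A b \<Lambda> \<nu> \<psi> \<rho> r \<alpha>"
    and rpos: "r > 0" and alpha1: "\<alpha> \<ge> 1" and rho0: "0 < \<rho>" and rho1: "\<rho> < 1"
    and c_eq: "c = (1 + sqrt \<rho>) / (1 - sqrt \<rho>) * \<alpha>"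
    and F_eq: "F = 2^K * c * (((sigma_max A)^2 + \<nu>^2) / \<nu>^2)"
    and minit: "m_init \<ge> 1"
    and evK: "sketch_event A \<Lambda> \<nu> \<rho> (m_init * 2^K) (\<omega> K)"
    and evk: "\<forall>k<K. \<exists>\<rho>'. 0 \<le> \<rho>' \<and> 1 + max (sqrt \<rho>') \<rho>' \<le> 2^K \<and> sketch_event A \<Lambda> \<nu> \<rho>' (m_init * 2^k) (\<omega> k)"
begin

definition "PP k = HSmat A \<Lambda> \<nu> (m_init * 2^k) (\<omega> k)"
definition "sub x = subopt A b \<Lambda> \<nu> x"

definition Inv :: "'d alg_state \<Rightarrow> bool" where
  "Inv st \<longleftrightarrow> (case st of (t, I, k, xs, dI) \<Rightarrow>
     length xs = Suc t \<and> xs ! 0 = x0 \<and> I \<le> t \<and> k \<le> K \<and>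
     dI = dtil A b \<Lambda> \<nu> (PP k) (xs ! I) \<and>
     drop I xs = pfom_list \<psi> (PP k) (xs ! I) (t - I) \<and>
     sub (xs ! I) \<le> F^k * r^I * sub x0 \<and>
     (k < K \<longrightarrow> (\<forall>s. I \<le> s \<and> s \<le> t \<longrightarrow> sub (xs ! s) \<le> F * r^(s - I) * sub (xs ! I))) \<and>
     (\<forall>s\<le>t. sub (xs ! s) \<le> \<alpha> * F^K * r^s * sub x0))"

lemma sqrt_rho: "sqrt \<rho> < 1" "0 < sqrt \<rho>" "max (sqrt \<rho>) \<rho> = sqrt \<rho>"
proof -
  show "sqrt \<rho> < 1" "0 < sqrt \<rho>" using rho0 rho1 by auto
  have e: "sqrt \<rho> * sqrt \<rho> = \<rho>" using rho0 by simp
  have "sqrt \<rho> * sqrt \<rho> \<le> sqrt \<rho> * 1" using rho0 rho1 by (intro mult_left_mono) auto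
  hence "\<rho> \<le> sqrt \<rho>" using e by simp
  thus "max (sqrt \<rho>) \<rho> = sqrt \<rho>" by simp
qed

lemma c_nonneg: "c \<ge> 0"
  using sqrt_rho alpha1 by (simp add: c_eq)

lemma kappa_ge1: "((sigma_max A)^2 + \<nu>^2) / \<nu>^2 \<ge> 1"
  using nupos by simp

lemma c_ge1: "c \<ge> 1"
proof -
  have "(1 + sqrt \<rho>) / (1 - sqrt \<rho>) \<ge> 1" using sqrt_rho by simp
  thus ?thesis using alpha1 unfolding c_eq by (metis mult_mono' mult_1 zero_le_one order_trans)
qed

lemma F_ge1: "F \<ge> 1"
proof -
  have "(2::real)^K \<ge> 1" by simp
  hence "2^K * c \<ge> 1" using c_ge1 by (metis mult_mono' mult_1 zero_le_one order_trans)
  thus ?thesis unfolding F_eq using kappa_ge1 by (metis mult_mono' mult_1 zero_le_one order_trans)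
qed

lemma sub_nonneg: "0 \<le> sub x"
  unfolding sub_def by (rule subopt_nonneg[OF Lsym Lge nupos])


lemma PP_posdef: "pos_def (PP k)"
  unfolding PP_def by (rule HS_posdef[OF Lsym Lge nupos])

lemma xp_eq:
  assumes "drop I xs = pfom_list \<psi> (PP k) (xs ! I) (t - I)"
  shows "\<psi> (t - I) (drop I xs) (PP k) = pfom_list \<psi> (PP k) (xs ! I) (Suc (t - I)) ! Suc (t - I)"
  using assms by (simp add: nth_append)

lemma lemA:
  assumes d: "drop I xs = pfom_list \<psi> (PP K) (xs ! I) (t - I)" and It: "I \<le> t"
  shows "sub (\<psi> (t - I) (drop I xs) (PP K)) \<le> \<alpha> * r^(Suc t - I) * sub (xs ! I)"
proof -
  have m1: "m_init * 2^K \<ge> 1" using minit by (simp add: Suc_le_eq)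
  have "subopt A b \<Lambda> \<nu> (pfom_list \<psi> (HSmat A \<Lambda> \<nu> (m_init * 2^K) (\<omega> K)) (xs ! I) (Suc (t - I)) ! Suc (t - I))
        \<le> \<alpha> * r ^ Suc (t - I) * subopt A b \<Lambda> \<nu> (xs ! I)"
    using lc m1 evK unfolding lin_conv_def by blast
  moreover have "Suc t - I = Suc (t - I)" using It by simp
  moreover have "\<psi> (t - I) (drop I xs) (PP K) = pfom_list \<psi> (PP K) (xs ! I) (Suc (t - I)) ! Suc (t - I)"
    by (rule xp_eq[OF d])
  ultimately show ?thesis by (simp only: sub_def PP_def)
qed

lemma ev_bounds:
  assumes "sketch_event A \<Lambda> \<nu> \<rho>' m S"
  shows "\<forall>x. x \<bullet> (HSmat A \<Lambda> \<nu> m S *v x) \<le> (1 + max (sqrt \<rho>') \<rho>') * (x \<bullet> (Hmat A \<Lambda> \<nu> *v x))"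
    "\<forall>x. (1 - max (sqrt \<rho>') \<rho>') * (x \<bullet> (Hmat A \<Lambda> \<nu> *v x)) \<le> x \<bullet> (HSmat A \<Lambda> \<nu> m S *v x)"
  using event_bound[OF Lsym Lge nupos assms] by (auto simp: algebra_simps abs_le_iff)

lemma lemB:
  assumes d: "drop I xs = pfom_list \<psi> (PP K) (xs ! I) (t - I)" and It: "I \<le> t"
    and dI: "dI = dtil A b \<Lambda> \<nu> (PP K) (xs ! I)"
  shows "\<not> (dtil A b \<Lambda> \<nu> (PP K) (\<psi> (t - I) (drop I xs) (PP K)) / dI > c * r^(Suc t - I))"
proof -
  define xp where "xp = \<psi> (t - I) (drop I xs) (PP K)"
  define n where "n = Suc t - I"
  define dp where "dp = dtil A b \<Lambda> \<nu> (PP K) xp"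
  have up: "\<forall>x. x \<bullet> (PP K *v x) \<le> (1 + sqrt \<rho>) * (x \<bullet> (Hmat A \<Lambda> \<nu> *v x))"
    using ev_bounds(1)[OF evK] sqrt_rho(3) by (simp add: PP_def)
  have lo: "\<forall>x. (1 - sqrt \<rho>) * (x \<bullet> (Hmat A \<Lambda> \<nu> *v x)) \<le> x \<bullet> (PP K *v x)"
    using ev_bounds(2)[OF evK] sqrt_rho(3) by (simp add: PP_def)
  have s1: "dp \<le> sub xp / (1 - sqrt \<rho>)"
    unfolding dp_def sub_def PP_def
    by (rule dtil_le_subopt[OF Lsym Lge nupos]) (use sqrt_rho lo in \<open>simp_all add: PP_def\<close>)
  have s2: "sub (xs ! I) \<le> (1 + sqrt \<rho>) * dI"
    unfolding dI sub_def PP_def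
    by (rule subopt_le_dtil[OF Lsym Lge nupos]) (use sqrt_rho up in \<open>simp_all add: PP_def\<close>)
  have s3: "sub xp \<le> \<alpha> * r^n * sub (xs ! I)" unfolding xp_def n_def by (rule lemA[OF d It])
  have an: "0 \<le> \<alpha> * r^n" using alpha1 rpos by simp
  have "dp \<le> \<alpha> * r^n * sub (xs ! I) / (1 - sqrt \<rho>)"
    using s1 s3 sqrt_rho by (smt (verit) divide_right_mono)
  also have "\<dots> \<le> \<alpha> * r^n * ((1 + sqrt \<rho>) * dI) / (1 - sqrt \<rho>)"
    using s2 sqrt_rho an by (intro divide_right_mono mult_left_mono) auto
  also have "\<dots> = c * r^n * dI" using sqrt_rho by (simp add: c_eq field_simps)
  finally have main: "dp \<le> c * r^n * dI" .
  have dI0: "dI \<ge> 0" unfolding dI PP_def by (rule dtil_nonneg[OF Lsym Lge nupos])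
  have "dp / dI \<le> c * r^n"
  proof (cases "dI = 0")
    case True thus ?thesis using c_nonneg rpos by simp
  next
    case False
    hence "dI > 0" using dI0 by simp
    thus ?thesis using main by (simp add: pos_divide_le_eq)
  qed
  thus ?thesis unfolding dp_def xp_def n_def by simp
qed

lemma lemC:
  assumes kK: "k < K" and d: "drop I xs = pfom_list \<psi> (PP k) (xs ! I) (t - I)" and It: "I \<le> t"
    and dI: "dI = dtil A b \<Lambda> \<nu> (PP k) (xs ! I)"
    and acc: "\<not> (dtil A b \<Lambda> \<nu> (PP k) (\<psi> (t - I) (drop I xs) (PP k)) / dI > c * r^(Suc t - I))"
  shows "sub (\<psi> (t - I) (drop I xs) (PP k)) \<le> F * r^(Suc t - I) * sub (xs ! I)"
proof -
  define xp where "xp = \<psi> (t - I) (drop I xs) (PP k)"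
  define n where "n = Suc t - I"
  define dp where "dp = dtil A b \<Lambda> \<nu> (PP k) xp"
  define \<kappa> where "\<kappa> = ((sigma_max A)^2 + \<nu>^2) / \<nu>^2"
  have kap: "\<kappa> \<ge> 1" unfolding \<kappa>_def by (rule kappa_ge1)
  obtain \<rho>' where r': "0 \<le> \<rho>'" "1 + max (sqrt \<rho>') \<rho>' \<le> 2^K"
    "sketch_event A \<Lambda> \<nu> \<rho>' (m_init * 2^k) (\<omega> k)" using evk kK by blast
  define \<epsilon> where "\<epsilon> = max (sqrt \<rho>') \<rho>'"
  have e0: "\<epsilon> \<ge> 0" using r'(1) by (simp add: \<epsilon>_def)
  have up: "\<forall>x. x \<bullet> (PP k *v x) \<le> (1 + \<epsilon>) * (x \<bullet> (Hmat A \<Lambda> \<nu> *v x))"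
    using ev_bounds(1)[OF r'(3)] by (simp add: PP_def \<epsilon>_def)
  have s1: "sub xp \<le> (1 + \<epsilon>) * dp"
    unfolding dp_def sub_def PP_def
    by (rule subopt_le_dtil[OF Lsym Lge nupos]) (use e0 up in \<open>simp_all add: PP_def\<close>)
  have lo: "\<forall>x. 1 / \<kappa> * (x \<bullet> (Hmat A \<Lambda> \<nu> *v x)) \<le> x \<bullet> (PP k *v x)"
  proof
    fix x
    have "x \<bullet> (Hmat A \<Lambda> \<nu> *v x) \<le> \<kappa> * (x \<bullet> (PP k *v x))"
      unfolding \<kappa>_def PP_def by (rule H_le_kappa[OF Lsym Lge nupos])
    thus "1 / \<kappa> * (x \<bullet> (Hmat A \<Lambda> \<nu> *v x)) \<le> x \<bullet> (PP k *v x)" using kap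
      by (simp add: field_simps)
  qed
  have s2: "dI \<le> \<kappa> * sub (xs ! I)"
  proof -
    have "dI \<le> sub (xs ! I) / (1 / \<kappa>)"
      unfolding dI sub_def PP_def
      by (rule dtil_le_subopt[OF Lsym Lge nupos]) (use kap lo in \<open>simp_all add: PP_def\<close>)
    thus ?thesis by (simp add: mult.commute)
  qed
  have dI0: "dI \<ge> 0" unfolding dI PP_def by (rule dtil_nonneg[OF Lsym Lge nupos])
  have dp0: "dp \<ge> 0" unfolding dp_def PP_def by (rule dtil_nonneg[OF Lsym Lge nupos])
  have Fe: "F = 2^K * c * \<kappa>" by (simp add: F_eq \<kappa>_def)
  show ?thesis
  proof (cases "dI = 0")
    case False
    hence dIp: "dI > 0" using dI0 by simp
    have "dp / dI \<le> c * r^n" using acc unfolding dp_def xp_def n_def by simp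
    hence dpb: "dp \<le> c * r^n * dI" using dIp by (simp add: pos_divide_le_eq)
    have crn: "0 \<le> c * r^n" using c_nonneg rpos by simp
    have "sub xp \<le> (1 + \<epsilon>) * (c * r^n * dI)"
      using s1 dpb e0 by (smt (verit) mult_left_mono)
    also have "\<dots> \<le> 2^K * (c * r^n * (\<kappa> * sub (xs ! I)))"
      using r'(2) e0 crn dI0 s2 unfolding \<epsilon>_def[symmetric]
      by (intro mult_mono mult_left_mono) auto
    also have "\<dots> = F * r^n * sub (xs ! I)" by (simp add: Fe)
    finally show ?thesis unfolding xp_def n_def .
  next
    case True
    have "sub (xs ! I) \<le> (1 + \<epsilon>) * dI"
      unfolding dI sub_def PP_def
      by (rule subopt_le_dtil[OF Lsym Lge nupos]) (use e0 up in \<open>simp_all add: PP_def\<close>)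
    hence "sub (xs ! I) = 0" using True sub_nonneg[of "xs ! I"] by simp
    hence g: "grad_f A b \<Lambda> \<nu> (xs ! I) = 0" unfolding sub_def by (rule subopt_zero[OF Lsym Lge nupos])
    have "xp = xs ! I"
      using pfom_const[OF pf PP_posdef g, of "Suc (t - I)"] unfolding xp_def xp_eq[OF d] by simp
    thus ?thesis using \<open>sub (xs ! I) = 0\<close> unfolding xp_def by simp
  qed
qed


lemma aFK: "\<alpha> * F^K \<ge> 1"
proof -
  have "F^K \<ge> 1" using F_ge1 by simp
  thus ?thesis using alpha1 by (metis mult_mono' mult_1 zero_le_one order_trans)
qed

lemma Inv_init: "Inv (0, 0, 0, [x0], dtil A b \<Lambda> \<nu> (HSmat A \<Lambda> \<nu> m_init (\<omega> 0)) x0)"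
proof -
  have a: "sub x0 \<le> F * sub x0" using F_ge1 sub_nonneg[of x0] by (metis mult_le_cancel_right1 less_le_not_le)
  have b: "sub x0 \<le> \<alpha> * F^K * sub x0" using aFK sub_nonneg[of x0] by (metis mult_le_cancel_right1 less_le_not_le)
  show ?thesis unfolding Inv_def PP_def using a b by simp
qed

lemma drop_last: "length xs = Suc t \<Longrightarrow> drop t xs = [xs ! t]"
  by (metis Cons_nth_drop_Suc drop_all lessI order_refl)

lemma Inv_step:
  assumes inv: "Inv st"
  shows "Inv (alg_step A b \<Lambda> \<nu> \<psi> c r m_init \<omega> T st)"
proof -
  obtain t I k xs dI where st: "st = (t, I, k, xs, dI)" by (cases st) auto
  have h1: "length xs = Suc t" and h2: "xs ! 0 = x0" and h3: "I \<le> t" and h4: "k \<le> K"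
    and h5: "dI = dtil A b \<Lambda> \<nu> (PP k) (xs ! I)"
    and h6: "drop I xs = pfom_list \<psi> (PP k) (xs ! I) (t - I)"
    and h7: "sub (xs ! I) \<le> F^k * r^I * sub x0"
    and h8: "k < K \<longrightarrow> (\<forall>s. I \<le> s \<and> s \<le> t \<longrightarrow> sub (xs ! s) \<le> F * r^(s - I) * sub (xs ! I))"
    and h9: "\<forall>s\<le>t. sub (xs ! s) \<le> \<alpha> * F^K * r^s * sub x0"
    using inv unfolding Inv_def st by auto
  show ?thesis
  proof (cases "t < T")
    case False
    thus ?thesis using inv by (simp add: alg_step_def st)
  next
    case True
    define xp where "xp = \<psi> (t - I) (drop I xs) (PP k)"
    define dp where "dp = dtil A b \<Lambda> \<nu> (PP k) xp"
    have step: "alg_step A b \<Lambda> \<nu> \<psi> c r m_init \<omega> T st =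
      (if dp / dI > c * r^(Suc t - I) then (t, t, Suc k, xs, dtil A b \<Lambda> \<nu> (PP (Suc k)) (xs ! t))
       else (Suc t, I, k, xs @ [xp], dI))"
      by (simp add: alg_step_def st True Let_def PP_def xp_def dp_def)
    have F0: "F \<ge> 0" using F_ge1 by simp
    have r0: "r \<ge> 0" using rpos by simp
    have rpow: "r^(Suc t - I) * r^I = r^(Suc t)" using h3
      by (metis Suc_diff_le le_SucI power_add add.commute le_add_diff_inverse2 Suc_le_mono)
    show ?thesis
    proof (cases "dp / dI > c * r^(Suc t - I)")
      case True
      have kK: "k < K"
      proof (rule ccontr)
        assume "\<not> k < K"
        hence "k = K" using h4 by simp
        thus False using lemB[OF _ h3, of xs dI] h6 h5 True by (simp add: xp_def dp_def)
      qed
      have i7: "sub (xs ! t) \<le> F^(Suc k) * r^t * sub x0"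
      proof -
        have "sub (xs ! t) \<le> F * r^(t - I) * sub (xs ! I)" using h8 kK h3 by blast
        also have "\<dots> \<le> F * r^(t - I) * (F^k * r^I * sub x0)"
          using h7 F0 r0 by (intro mult_left_mono) auto
        also have "\<dots> = F^(Suc k) * (r^(t - I) * r^I) * sub x0" by (simp add: algebra_simps)
        also have "r^(t - I) * r^I = r^t" using h3 by (simp add: power_add[symmetric])
        finally show ?thesis .
      qed
      have i8: "sub (xs ! t) \<le> F * r^(t - t) * sub (xs ! t)"
        using F_ge1 sub_nonneg[of "xs ! t"] by (simp add: mult_le_cancel_right1)
      have i8': "\<forall>s. t \<le> s \<and> s \<le> t \<longrightarrow> sub (xs ! s) \<le> F * r^(s - t) * sub (xs ! t)"
        using i8 by (metis le_antisym)
      show ?thesis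
        unfolding step using True h1 h2 h4 kK h9 i7 i8' drop_last[OF h1]
        by (simp add: Inv_def le_antisym)
    next
      case False
      have xs_I: "(xs @ [xp]) ! I = xs ! I" using h1 h3 by (simp add: nth_append)
      have xs_0: "(xs @ [xp]) ! 0 = x0" using h1 h2 by (simp add: nth_append)
      have xs_s: "(xs @ [xp]) ! s = xs ! s" if "s \<le> t" for s using h1 that by (simp add: nth_append)
      have xs_t: "(xs @ [xp]) ! Suc t = xp" using h1 by (simp add: nth_append)
      have i6: "drop I (xs @ [xp]) = pfom_list \<psi> (PP k) (xs ! I) (Suc t - I)"
      proof -
        have "drop I (xs @ [xp]) = drop I xs @ [xp]" using h1 h3 by simp
        also have "\<dots> = pfom_list \<psi> (PP k) (xs ! I) (Suc (t - I))"
          using h6 by (simp add: xp_def)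
        also have "Suc (t - I) = Suc t - I" using h3 by simp
        finally show ?thesis .
      qed
      have bnd9: "sub xp \<le> \<alpha> * F^K * r^(Suc t) * sub x0"
      proof (cases "k = K")
        case True
        have "sub xp \<le> \<alpha> * r^(Suc t - I) * sub (xs ! I)"
          using lemA[OF _ h3, of xs] h6 True by (simp add: xp_def)
        also have "\<dots> \<le> \<alpha> * r^(Suc t - I) * (F^K * r^I * sub x0)"
          using h7 True alpha1 r0 by (intro mult_left_mono) auto
        also have "\<dots> = \<alpha> * F^K * (r^(Suc t - I) * r^I) * sub x0" by (simp add: algebra_simps)
        finally show ?thesis unfolding rpow .
      next
        case False
        hence kK: "k < K" using h4 by simp
        have "sub xp \<le> F * r^(Suc t - I) * sub (xs ! I)"
          using lemC[OF kK h6 h3 h5] \<open>\<not> dp / dI > c * r^(Suc t - I)\<close> by (simp add: xp_def dp_def)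
        also have "\<dots> \<le> F * r^(Suc t - I) * (F^k * r^I * sub x0)"
          using h7 F0 r0 by (intro mult_left_mono) auto
        also have "\<dots> = F^(Suc k) * (r^(Suc t - I) * r^I) * sub x0" by (simp add: algebra_simps)
        also have "\<dots> \<le> F^K * r^(Suc t) * sub x0"
          unfolding rpow using F_ge1 kK sub_nonneg[of x0] r0
          by (intro mult_right_mono power_increasing) auto
        also have "\<dots> \<le> \<alpha> * F^K * r^(Suc t) * sub x0"
          using alpha1 F0 r0 sub_nonneg[of x0]
          by (metis mult_le_cancel_right1 mult.assoc less_le_not_le zero_le_mult_iff zero_le_power)
        finally show ?thesis .
      qed
      have i8: "k < K \<longrightarrow> (\<forall>s. I \<le> s \<and> s \<le> Suc t \<longrightarrow> sub ((xs @ [xp]) ! s) \<le> F * r^(s - I) * sub ((xs @ [xp]) ! I))"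
      proof (intro impI allI)
        fix s assume kK: "k < K" and s: "I \<le> s \<and> s \<le> Suc t"
        show "sub ((xs @ [xp]) ! s) \<le> F * r^(s - I) * sub ((xs @ [xp]) ! I)"
        proof (cases "s = Suc t")
          case True
          thus ?thesis using lemC[OF kK h6 h3 h5] \<open>\<not> dp / dI > c * r^(Suc t - I)\<close> xs_t xs_I
            by (simp add: xp_def dp_def)
        next
          case False
          thus ?thesis using h8 kK s xs_s xs_I by auto
        qed
      qed
      have i9: "\<forall>s\<le>Suc t. sub ((xs @ [xp]) ! s) \<le> \<alpha> * F^K * r^s * sub x0"
      proof (intro allI impI)
        fix s assume s: "s \<le> Suc t"
        show "sub ((xs @ [xp]) ! s) \<le> \<alpha> * F^K * r^s * sub x0"
        proof (cases "s = Suc t")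
          case True thus ?thesis using bnd9 xs_t by simp
        next
          case False thus ?thesis using h9 s xs_s by auto
        qed
      qed
      show ?thesis
        unfolding step using False h1 h3 h4 h5 h7 i6 i8 i9 xs_I xs_0
        by (simp add: Inv_def)
    qed
  qed
qed

lemma Inv_run: "Inv (alg_run A b \<Lambda> \<nu> \<psi> c r m_init \<omega> T x0 j)"
proof (induction j)
  case 0 show ?case by (simp add: alg_run_def Inv_init)
next
  case (Suc j)
  have "alg_run A b \<Lambda> \<nu> \<psi> c r m_init \<omega> T x0 (Suc j) =
        alg_step A b \<Lambda> \<nu> \<psi> c r m_init \<omega> T (alg_run A b \<Lambda> \<nu> \<psi> c r m_init \<omega> T x0 j)"
    by (simp add: alg_run_def)
  thus ?case using Inv_step[OF Suc.IH] by simp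
qed


lemma final_bounds:
  "case alg_run A b \<Lambda> \<nu> \<psi> c r m_init \<omega> T x0 j of (t, I, k, xs, dI) \<Rightarrow>
     k \<le> K \<and> xs ! 0 = x0 \<and> (\<forall>s\<le>t. subopt A b \<Lambda> \<nu> (xs ! s) \<le> \<alpha> * F^K * r^s * subopt A b \<Lambda> \<nu> x0)"
  using Inv_run[of j] unfolding Inv_def sub_def by (auto split: prod.splits)

end

lemma K_facts:
  fixes md mi :: nat and \<rho> :: real
  assumes md: "md \<ge> 1" and mi: "mi \<ge> 1" and rho: "0 < \<rho>"
  defines "x \<equiv> real md / (real mi * \<rho>)"
  defines "K \<equiv> nat \<lceil>max 0 (log 2 x)\<rceil>"
  shows "x \<le> 2^K" and "K \<ge> 1 \<Longrightarrow> 2^K < 2 * x"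
proof -
  have x0: "x > 0" using md mi rho by (simp add: x_def)
  have Kr: "real K = of_int \<lceil>max 0 (log 2 x)\<rceil>" unfolding K_def by simp
  have "log 2 x \<le> real K" unfolding Kr
    by (meson ceiling_correct max.cobounded2 order_trans)
  hence "x \<le> 2 powr real K" using x0 by (simp add: log_le_iff)
  thus "x \<le> 2^K" by (simp add: powr_realpow)
  assume K1: "K \<ge> 1"
  have "max 0 (log 2 x) > 0"
  proof (rule ccontr)
    assume "\<not> 0 < max 0 (log 2 x)"
    hence "max 0 (log 2 x) = 0" by simp
    thus False using K1 by (simp add: K_def)
  qed
  hence lg: "max 0 (log 2 x) = log 2 x" by simp
  have "real K - 1 < log 2 x" using Kr lg ceiling_correct[of "log 2 x"] by simp
  hence "2 powr (real K - 1) < x" using x0 by (simp add: less_log_iff)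
  hence "2 powr real K / 2 < x" by (simp add: powr_diff)
  thus "2^K < 2 * x" by (simp add: powr_realpow)
qed

lemma prob_bound:
  fixes Mk :: "nat \<Rightarrow> 'a measure" and G :: "nat \<Rightarrow> 'a set"
  assumes P: "\<And>k. prob_space (Mk k)"
    and G: "\<And>k. k \<le> K \<Longrightarrow> G k \<in> sets (Mk k)"
    and Gm: "\<And>k. k \<le> K \<Longrightarrow> measure (Mk k) (G k) \<ge> 1 - \<delta>"
  shows "{\<omega>\<in>space (PiM UNIV Mk). \<forall>k\<in>{..K}. \<omega> k \<in> G k} \<in> sets (PiM UNIV Mk) \<and>
         measure (PiM UNIV Mk) {\<omega>\<in>space (PiM UNIV Mk). \<forall>k\<in>{..K}. \<omega> k \<in> G k} \<ge> 1 - (1 + real K) * \<delta>"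
proof -
  define M where "M = PiM UNIV Mk"
  interpret pps: product_prob_space Mk UNIV
    by (simp add: product_prob_space_def product_prob_space_axioms_def product_sigma_finite_def
        P prob_space_imp_sigma_finite)
  interpret pM: prob_space M unfolding M_def by (rule pps.P.prob_space_axioms)
  define B where "B k = {\<omega>\<in>space M. \<omega> k \<in> G k}" for k
  define E where "E = {\<omega>\<in>space M. \<forall>k\<in>{..K}. \<omega> k \<in> G k}"
  have Bs: "B k \<in> sets M" if "k \<le> K" for k
    unfolding B_def M_def using G[OF that] by (intro sets_Collect_single') auto
  have BM: "measure M (B k) = measure (Mk k) (G k)" if "k \<le> K" for k
    unfolding B_def M_def using pps.emeasure_PiM_Collect_single[of k "G k"] G[OF that]
    by (simp add: measure_def)
  have Es: "E \<in> sets M" unfolding E_def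
    using Bs unfolding B_def by (intro sets.sets_Collect_finite_All) auto
  have compl: "space M - E = (\<Union>k\<in>{..K}. space M - B k)" unfolding E_def B_def by auto
  have "measure M (space M - E) \<le> (\<Sum>k\<in>{..K}. measure M (space M - B k))"
    unfolding compl using Bs by (intro pM.finite_measure_subadditive_finite) auto
  also have "\<dots> \<le> (\<Sum>k\<in>{..K}. \<delta>)"
  proof (rule sum_mono)
    fix k assume "k \<in> {..K}"
    hence k: "k \<le> K" by simp
    show "measure M (space M - B k) \<le> \<delta>"
      using pM.prob_compl[OF Bs[OF k]] BM[OF k] Gm[OF k] by simp
  qed
  also have "\<dots> = (1 + real K) * \<delta>" by simp
  finally have "measure M (space M - E) \<le> (1 + real K) * \<delta>" .
  hence "measure M E \<ge> 1 - (1 + real K) * \<delta>" using pM.prob_compl[OF Es] by simp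
  thus ?thesis using Es unfolding E_def M_def by simp
qed

theorem theorem4p1:
  fixes A :: "real^'d^'n" and b :: "real^'d" and \<Lambda> :: "real^'d^'d"
    and \<nu> \<rho> \<alpha> \<delta> :: real and \<phi> :: "real \<Rightarrow> real"
    and \<psi> :: "'d pfom" and D :: "nat \<Rightarrow> (nat \<Rightarrow> real^'n) measure"
    and m_init T :: nat and x0 :: "real^'d"
  assumes "CARD('d) \<le> CARD('n)"
    and "\<forall>i j. i \<noteq> j \<longrightarrow> \<Lambda> $ i $ j = 0"
    and "\<forall>x. x \<bullet> x \<le> x \<bullet> (\<Lambda> *v x)"
    and "\<nu> > 0"
    and "0 < \<rho>" and "\<rho> < 1/4"
    and "\<forall>r\<in>{0<..<1}. 0 < \<phi> r"
    and "\<alpha> \<ge> 0"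
    and "is_pfom A b \<Lambda> \<nu> \<psi>"
    and "lin_conv A b \<Lambda> \<nu> \<psi> \<rho> (\<phi> \<rho>) \<alpha>"
    and "0 < \<delta>" and "\<delta> < 1"
    and "\<forall>m\<ge>1. prob_space (D m) \<and> sets (D m) = sets borel"
    and "crit_set A \<Lambda> \<nu> D \<delta> \<noteq> {}"
    and "m_init \<ge> 1"
  shows "let m\<delta> = crit_size A \<Lambda> \<nu> D \<delta>;
             Kmax = nat \<lceil>max 0 (log 2 (real m\<delta> / (real m_init * \<rho>)))\<rceil>;
             c = c_const \<alpha> \<rho>;
             \<sigma>1 = sigma_max A;
             M = PiM UNIV (\<lambda>k. D (m_init * 2^k))
         in \<exists>E \<in> sets M. measure M E \<ge> 1 - (1 + real Kmax) * \<delta> \<and>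
              (\<forall>\<omega>\<in>E. \<forall>j. case alg_run A b \<Lambda> \<nu> \<psi> c (\<phi> \<rho>) m_init \<omega> T x0 j of
                 (t, I, k, xs, dI) \<Rightarrow>
                   real (m_init * 2^k) \<le> max (real m_init) (2 * real m\<delta> / \<rho>) \<and>
                   k \<le> Kmax \<and>
                   (\<forall>s\<le>t. subopt A b \<Lambda> \<nu> (xs ! s) / subopt A b \<Lambda> \<nu> (xs ! 0)
                      \<le> \<alpha> * \<phi> \<rho> ^ s * (c * (\<sigma>1^2 + \<nu>^2) / \<nu>^2) ^ Kmax * 2 ^ (Kmax^2)))"
proof -
  define md where "md = crit_size A \<Lambda> \<nu> D \<delta>"
  define K where "K = nat \<lceil>max 0 (log 2 (real md / (real m_init * \<rho>)))\<rceil>"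
  define c where "c = c_const \<alpha> \<rho>"
  define M where "M = PiM UNIV (\<lambda>k. D (m_init * 2^k))"
  define \<kappa> where "\<kappa> = ((sigma_max A)^2 + \<nu>^2) / \<nu>^2"
  define F where "F = 2^K * c * \<kappa>"
  define r where "r = \<phi> \<rho>"
  define mk where "mk k = m_init * 2^k" for k
  define \<rho>k where "\<rho>k k = max \<rho> (real md / real (mk k))" for k
  define G where "G k = {S \<in> space (D (mk k)). sketch_event A \<Lambda> \<nu> (\<rho>k k) (mk k) S}" for k
  have Lsym: "transpose \<Lambda> = \<Lambda>" by (rule Lam_sym[OF assms(2)])
  have Lge: "\<forall>x. x \<bullet> x \<le> x \<bullet> (\<Lambda> *v x)" by (rule assms(3))
  have nupos: "\<nu> > 0" by (rule assms(4))
  have rho0: "0 < \<rho>" and rho4: "\<rho> < 1/4" using assms(5,6) by auto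
  have rho1: "\<rho> < 1" using rho4 by simp
  have rpos: "r > 0" using assms(7) rho0 rho1 by (simp add: r_def)
  have minit: "m_init \<ge> 1" by (rule assms(15))
  have mdin: "md \<in> crit_set A \<Lambda> \<nu> D \<delta>"
    unfolding md_def crit_size_def by (rule Inf_nat_def1[OF assms(14)])
  have md1: "md \<ge> 1" using mdin by (simp add: crit_set_def)
  have crit: "\<forall>\<rho>'>0. \<forall>m::nat. m \<ge> 1 \<and> real m \<ge> real md / \<rho>' \<longrightarrow>
      measure (D m) {S \<in> space (D m). sketch_event A \<Lambda> \<nu> \<rho>' m S} \<ge> 1 - \<delta>"
    using mdin by (simp add: crit_set_def)
  have mk1: "mk k \<ge> 1" for k using minit by (simp add: mk_def Suc_le_eq)
  have mkpos: "real (mk k) > 0" for k using mk1[of k] by simp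
  have rk0: "\<rho>k k > 0" for k using rho0 by (simp add: \<rho>k_def)
  have Gm: "measure (D (mk k)) (G k) \<ge> 1 - \<delta>" for k
  proof -
    have "real md / real (mk k) \<le> \<rho>k k" by (simp add: \<rho>k_def)
    hence "real md \<le> \<rho>k k * real (mk k)" using mkpos[of k] by (simp add: divide_le_eq)
    hence "real md / \<rho>k k \<le> real (mk k)" using rk0[of k] by (simp add: divide_le_eq mult.commute)
    thus ?thesis using crit rk0[of k] mk1[of k] unfolding G_def by blast
  qed
  have Gs: "G k \<in> sets (D (mk k))" for k
  proof (rule ccontr)
    assume "G k \<notin> sets (D (mk k))"
    hence "measure (D (mk k)) (G k) = 0" by (rule measure_notin_sets)
    thus False using Gm[of k] assms(12) by simp
  qed
  have Dprob: "prob_space (D (mk k))" for k using assms(13) mk1[of k] by blast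
  define E where "E = {\<omega>\<in>space M. \<forall>k\<in>{..K}. \<omega> k \<in> G k}"
  have ES: "E \<in> sets M \<and> measure M E \<ge> 1 - (1 + real K) * \<delta>"
    using prob_bound[of "\<lambda>k. D (mk k)" K G \<delta>, OF Dprob Gs Gm]
    unfolding E_def M_def mk_def by simp
  define x where "x = real md / (real m_init * \<rho>)"
  have Kf1: "x \<le> 2^K" unfolding x_def K_def by (rule K_facts(1)[OF md1 minit rho0])
  have Kf2: "K \<ge> 1 \<Longrightarrow> 2^K < 2 * x" unfolding x_def K_def by (rule K_facts(2)[OF md1 minit rho0])
  have mi0: "real m_init > 0" using minit by simp
  have rhoK: "\<rho>k K = \<rho>"
  proof -
    have "real md = x * (real m_init * \<rho>)" using mi0 rho0 by (simp add: x_def)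
    also have "\<dots> \<le> 2^K * (real m_init * \<rho>)" using Kf1 mi0 rho0 by (intro mult_right_mono) auto
    finally have "real md \<le> \<rho> * real (mk K)" by (simp add: mk_def mult_ac)
    hence "real md / real (mk K) \<le> \<rho>" using mkpos[of K] by (simp add: divide_le_eq)
    thus ?thesis by (simp add: \<rho>k_def)
  qed
  have rk_le: "\<rho>k k \<le> 2^K / 4" for k
  proof -
    have p1: "(1::real) \<le> 2^K" by simp
    have a: "\<rho> \<le> 2^K / 4" using rho4 p1 by linarith
    have "real md / real (mk k) \<le> real md / real m_init"
      using mi0 minit by (intro divide_left_mono) (auto simp: mk_def)
    also have "\<dots> = x * \<rho>" using mi0 rho0 by (simp add: x_def)
    also have "\<dots> \<le> 2^K * \<rho>" using Kf1 rho0 by (intro mult_right_mono) auto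
    also have "\<dots> \<le> 2^K * (1/4)" using rho4 by (intro mult_left_mono) auto
    finally show ?thesis using a by (simp add: \<rho>k_def)
  qed
  have rk_bound: "1 + max (sqrt (\<rho>k k)) (\<rho>k k) \<le> 2^K" if "k < K" for k
  proof -
    have K1: "K \<ge> 1" using that by simp
    have p2: "(2::real) \<le> 2^K" using K1 by (metis power_one_right power_increasing one_le_numeral)
    show ?thesis
    proof (cases "\<rho>k k \<le> 1")
      case True
      hence "sqrt (\<rho>k k) \<le> 1" by simp
      hence "max (sqrt (\<rho>k k)) (\<rho>k k) \<le> 1" using True by (rule max.boundedI)
      thus ?thesis using p2 by linarith
    next
      case False
      hence g1: "\<rho>k k \<ge> 1" by simp
      have "\<rho>k k * 1 \<le> \<rho>k k * \<rho>k k" using g1 by (intro mult_left_mono) auto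
      hence "\<rho>k k \<le> (\<rho>k k)^2" by (simp add: power2_eq_square)
      hence "sqrt (\<rho>k k) \<le> \<rho>k k" using g1 by (simp add: real_sqrt_le_iff')
      hence "max (sqrt (\<rho>k k)) (\<rho>k k) = \<rho>k k" by simp
      thus ?thesis using rk_le[of k] p2 by simp
    qed
  qed
  have c_eq: "c = (1 + sqrt \<rho>) / (1 - sqrt \<rho>) * \<alpha>" by (simp add: c_def c_const_def)
  have lc: "lin_conv A b \<Lambda> \<nu> \<psi> \<rho> r \<alpha>" using assms(10) by (simp add: r_def)
  have alpha1: "\<alpha> \<ge> 1"
  proof -
    have "measure (D (mk K)) (G K) > 0" using Gm[of K] assms(12) by simp
    hence "G K \<noteq> {}" by auto
    then obtain S0 where "S0 \<in> G K" by blast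
    hence ev0: "sketch_event A \<Lambda> \<nu> \<rho> (mk K) S0" using rhoK by (simp add: G_def)
    define e :: "real^'d" where "e = axis undefined 1"
    have e0: "e \<noteq> 0" by (simp add: e_def axis_eq_0_iff)
    define y0 where "y0 = xstar A b \<Lambda> \<nu> + e"
    have "0 < e \<bullet> (Hmat A \<Lambda> \<nu> *v e)" using H_pd[OF Lsym Lge nupos] e0 by blast
    hence ypos: "subopt A b \<Lambda> \<nu> y0 > 0" by (simp add: subopt_def y0_def)
    have "subopt A b \<Lambda> \<nu> (pfom_list \<psi> (HSmat A \<Lambda> \<nu> (mk K) S0) y0 0 ! 0) \<le> \<alpha> * r^0 * subopt A b \<Lambda> \<nu> y0"
      using lc mk1[of K] ev0 unfolding lin_conv_def by blast
    hence "subopt A b \<Lambda> \<nu> y0 \<le> \<alpha> * subopt A b \<Lambda> \<nu> y0" by simp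
    thus ?thesis using ypos by simp
  qed
  have F0: "F \<ge> 0" unfolding F_def \<kappa>_def c_eq
    using alpha1 rho0 rho1 by (intro mult_nonneg_nonneg divide_nonneg_nonneg) auto
  have Fpow: "\<alpha> * F^K * r^s = \<alpha> * r^s * (c * ((sigma_max A)^2 + \<nu>^2) / \<nu>^2)^K * 2^(K^2)" for s
  proof -
    have "F^K = (2^K)^K * (c * \<kappa>)^K" by (simp add: F_def power_mult_distrib mult.assoc)
    also have "((2::real)^K)^K = 2^(K^2)" by (simp add: power_mult[symmetric] power2_eq_square)
    also have "c * \<kappa> = c * ((sigma_max A)^2 + \<nu>^2) / \<nu>^2" by (simp add: \<kappa>_def)
    finally show ?thesis by (simp add: mult_ac)
  qed
  have main: "\<forall>\<omega>\<in>E. \<forall>j. case alg_run A b \<Lambda> \<nu> \<psi> c (\<phi> \<rho>) m_init \<omega> T x0 j of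
                 (t, I, k, xs, dI) \<Rightarrow>
                   real (m_init * 2^k) \<le> max (real m_init) (2 * real md / \<rho>) \<and>
                   k \<le> K \<and>
                   (\<forall>s\<le>t. subopt A b \<Lambda> \<nu> (xs ! s) / subopt A b \<Lambda> \<nu> (xs ! 0)
                      \<le> \<alpha> * \<phi> \<rho> ^ s * (c * ((sigma_max A)^2 + \<nu>^2) / \<nu>^2) ^ K * 2 ^ (K^2))"
  proof (intro ballI allI)
    fix \<omega> j assume \<omega>: "\<omega> \<in> E"
    have \<omega>G: "\<omega> k \<in> G k" if "k \<le> K" for k using \<omega> that by (simp add: E_def)
    have evK: "sketch_event A \<Lambda> \<nu> \<rho> (m_init * 2^K) (\<omega> K)"
      using \<omega>G[of K] rhoK by (simp add: G_def mk_def)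
    have evk: "\<forall>k<K. \<exists>\<rho>'. 0 \<le> \<rho>' \<and> 1 + max (sqrt \<rho>') \<rho>' \<le> 2^K \<and> sketch_event A \<Lambda> \<nu> \<rho>' (m_init * 2^k) (\<omega> k)"
    proof (intro allI impI)
      fix k assume k: "k < K"
      show "\<exists>\<rho>'. 0 \<le> \<rho>' \<and> 1 + max (sqrt \<rho>') \<rho>' \<le> 2^K \<and> sketch_event A \<Lambda> \<nu> \<rho>' (m_init * 2^k) (\<omega> k)"
        using \<omega>G[of k] k rk_bound[OF k] rk0[of k] by (intro exI[of _ "\<rho>k k"]) (auto simp: G_def mk_def)
    qed
    have FB: "case alg_run A b \<Lambda> \<nu> \<psi> c r m_init \<omega> T x0 j of (t, I, k, xs, dI) \<Rightarrow>
       k \<le> K \<and> xs ! 0 = x0 \<and> (\<forall>s\<le>t. subopt A b \<Lambda> \<nu> (xs ! s) \<le> \<alpha> * F^K * r^s * subopt A b \<Lambda> \<nu> x0)"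
      by (rule final_bounds[OF Lsym Lge nupos assms(9) lc rpos alpha1 rho0 rho1 c_eq
            F_def[unfolded \<kappa>_def] minit evK evk])
    obtain t I k xs dI where run: "alg_run A b \<Lambda> \<nu> \<psi> c r m_init \<omega> T x0 j = (t, I, k, xs, dI)"
      by (cases "alg_run A b \<Lambda> \<nu> \<psi> c r m_init \<omega> T x0 j") auto
    have kK: "k \<le> K" and x00: "xs ! 0 = x0"
      and sb: "\<forall>s\<le>t. subopt A b \<Lambda> \<nu> (xs ! s) \<le> \<alpha> * F^K * r^s * subopt A b \<Lambda> \<nu> x0"
      using FB unfolding run by auto
    have mb: "real (m_init * 2^k) \<le> max (real m_init) (2 * real md / \<rho>)"
    proof (cases "k = 0")
      case True thus ?thesis by simp
    next
      case False
      hence K1: "K \<ge> 1" using kK by simp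
      have "real (m_init * 2^k) = real m_init * 2^k" by simp
      also have "\<dots> \<le> real m_init * 2^K" using kK mi0 by (intro mult_left_mono power_increasing) auto
      also have "\<dots> \<le> real m_init * (2 * x)" using Kf2[OF K1] mi0 by (intro mult_left_mono) auto
      also have "\<dots> = 2 * real md / \<rho>" using mi0 rho0 by (simp add: x_def field_simps)
      finally show ?thesis by simp
    qed
    have sb2: "\<forall>s\<le>t. subopt A b \<Lambda> \<nu> (xs ! s) / subopt A b \<Lambda> \<nu> (xs ! 0)
                      \<le> \<alpha> * \<phi> \<rho> ^ s * (c * ((sigma_max A)^2 + \<nu>^2) / \<nu>^2) ^ K * 2 ^ (K^2)"
    proof (intro allI impI)
      fix s assume s: "s \<le> t"
      have nn: "0 \<le> \<alpha> * F^K * r^s" using alpha1 F0 rpos by simp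
      have "subopt A b \<Lambda> \<nu> (xs ! s) / subopt A b \<Lambda> \<nu> x0 \<le> \<alpha> * F^K * r^s"
      proof (cases "subopt A b \<Lambda> \<nu> x0 = 0")
        case True thus ?thesis using nn by simp
      next
        case False
        hence "subopt A b \<Lambda> \<nu> x0 > 0" using subopt_nonneg[OF Lsym Lge nupos, where A = A and b = b and x = x0] by simp
        thus ?thesis using sb s by (simp add: pos_divide_le_eq)
      qed
      thus "subopt A b \<Lambda> \<nu> (xs ! s) / subopt A b \<Lambda> \<nu> (xs ! 0)
                      \<le> \<alpha> * \<phi> \<rho> ^ s * (c * ((sigma_max A)^2 + \<nu>^2) / \<nu>^2) ^ K * 2 ^ (K^2)"
        unfolding x00 using Fpow[of s] unfolding r_def by linarith
    qed
    show "case alg_run A b \<Lambda> \<nu> \<psi> c (\<phi> \<rho>) m_init \<omega> T x0 j of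
                 (t, I, k, xs, dI) \<Rightarrow>
                   real (m_init * 2^k) \<le> max (real m_init) (2 * real md / \<rho>) \<and>
                   k \<le> K \<and>
                   (\<forall>s\<le>t. subopt A b \<Lambda> \<nu> (xs ! s) / subopt A b \<Lambda> \<nu> (xs ! 0)
                      \<le> \<alpha> * \<phi> \<rho> ^ s * (c * ((sigma_max A)^2 + \<nu>^2) / \<nu>^2) ^ K * 2 ^ (K^2))"
      using run[unfolded r_def] mb kK sb2 by simp
  qed
  have "\<exists>E\<in>sets M. measure M E \<ge> 1 - (1 + real K) * \<delta> \<and>
              (\<forall>\<omega>\<in>E. \<forall>j. case alg_run A b \<Lambda> \<nu> \<psi> c (\<phi> \<rho>) m_init \<omega> T x0 j of
                 (t, I, k, xs, dI) \<Rightarrow>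
                   real (m_init * 2^k) \<le> max (real m_init) (2 * real md / \<rho>) \<and>
                   k \<le> K \<and>
                   (\<forall>s\<le>t. subopt A b \<Lambda> \<nu> (xs ! s) / subopt A b \<Lambda> \<nu> (xs ! 0)
                      \<le> \<alpha> * \<phi> \<rho> ^ s * (c * ((sigma_max A)^2 + \<nu>^2) / \<nu>^2) ^ K * 2 ^ (K^2)))"
    using ES main by blast
  thus ?thesis unfolding Let_def md_def K_def c_def M_def .
qed

end
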